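(* Fix $A\in\mathbb R$ and $T>0$. There is $C=C(A,T)$, not depending on $\epsilon$, such that for all sufficiently small $\epsilon>0$, all $0\le s<t\le\epsilon^{-2}T$, all $x,y\in\mathbb Z_{\ge0}$ and all $v\in[0,1]$, $$|\mathbf p_t^R(x,y)-\mathbf p_s^R(x,y)|\le C\,(1\wedge s^{-1/2-v})\,(t-s)^v.$$
   Context: Let $p_t(x)$, $x\in\mathbb Z$, denote the whole-line semi-discrete heat kernel, i.e. the solution of $\partial_tp_t(x)=\frac12\Delta p_t(x)$, $p_0(x)=1_{\{x=0\}}$, where $\Delta f(x)=f(x+1)+f(x-1)-2f(x)$. For $\epsilon>0$ let $\mu_A=1-A\epsilon$. The half-line Robin heat kernel is, for $t\ge0$ and $x,y\in\mathbb Z_{\ge0}$, $$\mathbf p_t^R(x,y)=p_t(x-y)+\mu_Ap_t(x+y+1)+(1-\mu_A^{-2})\sum_{z=2}^\infty p_t(x+y+z)\mu_A^z.$$ *)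

theory Defs
  imports "HOL-Analysis.Analysis"
begin

text \<open>Whole-line semi-discrete heat kernel: the solution of
  d/dt p_t(x) = 1/2 (p_t(x+1) + p_t(x-1) - 2 p_t(x)), p_0(x) = [x = 0],
  given by its explicit (modified Bessel function) series
  p_t(x) = e^{-t} I_{|x|}(t) = e^{-t} sum_k (t/2)^(2k+|x|) / (k! (k+|x|)!).\<close>
definition heat_kernel :: "real \<Rightarrow> int \<Rightarrow> real" where
  "heat_kernel t x = exp (- t) *
     (\<Sum>k. (t / 2) ^ (2 * k + nat \<bar>x\<bar>) / (fact k * fact (k + nat \<bar>x\<bar>)))"

definition muA :: "real \<Rightarrow> real \<Rightarrow> real" where
  "muA A \<epsilon> = 1 - A * \<epsilon>"

text \<open>Half-line Robin heat kernel; the sum over z \<ge> 2 is reindexed as z = j + 2.\<close>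
definition robin_kernel :: "real \<Rightarrow> real \<Rightarrow> real \<Rightarrow> nat \<Rightarrow> nat \<Rightarrow> real" where
  "robin_kernel A \<epsilon> t x y =
     heat_kernel t (int x - int y)
     + muA A \<epsilon> * heat_kernel t (int x + int y + 1)
     + (1 - (muA A \<epsilon>) powi (-2)) *
       (\<Sum>j. heat_kernel t (int x + int y + int (j + 2)) * (muA A \<epsilon>) ^ (j + 2))"

text \<open>The factor 1 \<and> s^{-1/2-v}, with the convention s^{-1/2-v} = +\<infinity> at s = 0.\<close>
definition min_one_pow :: "real \<Rightarrow> real \<Rightarrow> real" where
  "min_one_pow s v = (if s = 0 then 1 else min 1 (s powr (- 1/2 - v)))"

end

theory Submission
  imports Defs
begin

definition JJ :: "nat \<Rightarrow> int \<Rightarrow> real" where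
  "JJ m n = integral {-pi..pi} (\<lambda>\<theta>. cos \<theta> ^ m * cos (of_int n * \<theta>)) / (2*pi)"

lemma cos_int_integral:
  "integral {-pi..pi} (\<lambda>\<theta>. cos (of_int n * \<theta>)) = (if n = 0 then 2*pi else 0)"
proof (cases "n = 0")
  case True then show ?thesis by simp
next
  case False
  have d: "((\<lambda>\<theta>. sin (of_int n * \<theta>) / of_int n) has_vector_derivative cos (of_int n * \<theta>)) (at \<theta> within {-pi..pi})" for \<theta>
    using False by (auto intro!: derivative_eq_intros simp: has_real_derivative_iff_has_vector_derivative[symmetric])
  have s: "sin (of_int n * pi) = 0" using sin_times_pi_eq_0[of "of_int n"] by (simp add: mult.commute)
  have "((\<lambda>\<theta>. cos (of_int n * \<theta>)) has_integral (sin (of_int n * pi) / of_int n - sin (of_int n * (-pi)) / of_int n)) {-pi..pi}"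
    by (rule fundamental_theorem_of_calculus) (auto intro: d)
  then show ?thesis using False s by (simp add: integral_unique)
qed

lemma cos_prod: "cos (\<theta>::real) * cos (of_int n * \<theta>) = (cos (of_int (n+1) * \<theta>) + cos (of_int (n-1) * \<theta>)) / 2"
  by (simp add: algebra_simps cos_add cos_diff)

lemma int_cont: "continuous_on {-pi..pi} (f::real\<Rightarrow>real) \<Longrightarrow> f integrable_on {-pi..pi}"
  by (rule integrable_continuous_interval)

lemma JJ_0: "JJ 0 n = (if n = 0 then 1 else 0)"
  by (simp add: JJ_def cos_int_integral)

lemma JJ_Suc: "JJ (Suc m) n = (JJ m (n+1) + JJ m (n-1)) / 2"
proof -
  have "(\<lambda>\<theta>::real. cos \<theta> ^ Suc m * cos (of_int n * \<theta>)) = (\<lambda>\<theta>. (cos \<theta> ^ m * cos (of_int (n+1) * \<theta>)) / 2 + (cos \<theta> ^ m * cos (of_int (n-1) * \<theta>)) / 2)"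
    proof (rule ext)
    fix \<theta> :: real
    have "cos \<theta> ^ Suc m * cos (of_int n * \<theta>) = cos \<theta> ^ m * (cos \<theta> * cos (of_int n * \<theta>))" by simp
    also have "\<dots> = cos \<theta> ^ m * ((cos (of_int (n+1) * \<theta>) + cos (of_int (n-1) * \<theta>)) / 2)" by (simp only: cos_prod)
    finally show "cos \<theta> ^ Suc m * cos (of_int n * \<theta>) = (cos \<theta> ^ m * cos (of_int (n+1) * \<theta>)) / 2 + (cos \<theta> ^ m * cos (of_int (n-1) * \<theta>)) / 2"
      by (simp add: algebra_simps add_divide_distrib)
  qed
  moreover have "integral {-pi..pi} (\<lambda>\<theta>. (cos \<theta> ^ m * cos (of_int (n+1) * \<theta>)) / 2 + (cos \<theta> ^ m * cos (of_int (n-1) * \<theta>)) / 2)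
     = integral {-pi..pi} (\<lambda>\<theta>. cos \<theta> ^ m * cos (of_int (n+1) * \<theta>)) / 2 + integral {-pi..pi} (\<lambda>\<theta>. cos \<theta> ^ m * cos (of_int (n-1) * \<theta>)) / 2"
    by (subst integral_add) (auto intro!: int_cont continuous_intros)
  ultimately show ?thesis by (simp add: JJ_def add_divide_distrib)
qed

lemma JJ_neg: "JJ m (-n) = JJ m n"
  by (simp add: JJ_def)


lemma JJ_zero: "\<not> (\<exists>k\<le>m. n = 2 * int k - int m) \<Longrightarrow> JJ m n = 0"
proof (induction m arbitrary: n)
  case 0
  then show ?case by (auto simp: JJ_0)
next
  case (Suc m)
  have a: "\<not> (\<exists>k\<le>m. n + 1 = 2 * int k - int m)"
  proof
    assume "\<exists>k\<le>m. n + 1 = 2 * int k - int m"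
    then obtain k where "k \<le> m" "n + 1 = 2 * int k - int m" by blast
    then have "k \<le> Suc m \<and> n = 2 * int k - int (Suc m)" by simp
    then show False using Suc.prems by blast
  qed
  have b: "\<not> (\<exists>k\<le>m. n - 1 = 2 * int k - int m)"
  proof
    assume "\<exists>k\<le>m. n - 1 = 2 * int k - int m"
    then obtain k where "k \<le> m" "n - 1 = 2 * int k - int m" by blast
    then have "Suc k \<le> Suc m \<and> n = 2 * int (Suc k) - int (Suc m)" by simp
    then show False using Suc.prems by blast
  qed
  show ?case using Suc.IH[OF a] Suc.IH[OF b] by (simp add: JJ_Suc)
qed

lemma JJ_val: "JJ m (2 * int k - int m) = real (m choose k) / 2^m"
proof (induction m arbitrary: k)
  case 0
  then show ?case by (cases k) (auto simp: JJ_0)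
next
  case (Suc m)
  show ?case
  proof (cases k)
    case 0
    have z: "JJ m (- int m - 2) = 0" by (rule JJ_zero) auto
    have o: "JJ m (- int m) = 1 / 2^m" using Suc.IH[of 0] by simp
    have "JJ (Suc m) (2 * int k - int (Suc m)) = (JJ m (- int m) + JJ m (- int m - 2)) / 2"
      using 0 by (simp add: JJ_Suc algebra_simps)
    then show ?thesis using z o 0 by simp
  next
    case (Suc j)
    have e1: "2 * int k - int (Suc m) + 1 = 2 * int (Suc j) - int m" using Suc by simp
    have e2: "2 * int k - int (Suc m) - 1 = 2 * int j - int m" using Suc by simp
    show ?thesis
      unfolding JJ_Suc e1 e2 Suc.IH using Suc by (simp add: add_divide_distrib)
  qed
qed

lemma JJ_nonneg: "JJ m n \<ge> 0"
  by (induction m arbitrary: n) (auto simp: JJ_0 JJ_Suc)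

lemma JJ_le1: "JJ m n \<le> 1"
proof (induction m arbitrary: n)
  case 0 then show ?case by (simp add: JJ_0)
next
  case (Suc m)
  show ?case using Suc.IH[of "n+1"] Suc.IH[of "n-1"] by (simp add: JJ_Suc)
qed

lemma JJ_abs_n: "JJ m n = JJ m (int (nat \<bar>n\<bar>))"
proof (cases "n \<ge> 0")
  case False
  then have "int (nat \<bar>n\<bar>) = - n" by simp
  then show ?thesis by (simp only: JJ_neg)
qed simp

definition GG :: "real \<Rightarrow> int \<Rightarrow> real" where
  "GG r n = (\<Sum>m. JJ m n / fact m * r ^ m)"

lemma GG_summable: "summable (\<lambda>m. JJ m n / fact m * r ^ m)"
proof (rule summable_comparison_test[OF _ summable_exp[of "\<bar>r\<bar>"]])
  show "\<exists>N. \<forall>m\<ge>N. norm (JJ m n / fact m * r ^ m) \<le> inverse (fact m) * \<bar>r\<bar> ^ m"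
  proof (intro exI allI impI)
    fix m :: nat
    have "norm (JJ m n / fact m * r ^ m) = JJ m n * (inverse (fact m) * \<bar>r\<bar> ^ m)"
      using JJ_nonneg[of m n] by (simp add: abs_mult power_abs divide_inverse)
    also have "\<dots> \<le> 1 * (inverse (fact m) * \<bar>r\<bar> ^ m)"
      by (rule mult_right_mono[OF JJ_le1]) simp
    finally show "norm (JJ m n / fact m * r ^ m) \<le> inverse (fact m) * \<bar>r\<bar> ^ m" by simp
  qed
qed

lemma heat_GG: "heat_kernel r n = exp (- r) * GG r n"
proof -
  define N where "N = nat \<bar>n\<bar>"
  define c where "c m = JJ m (int N) / fact m * r ^ m" for m
  have cs: "c sums GG r n" unfolding c_def GG_def
    by (subst JJ_abs_n) (fold N_def, rule summable_sums, rule GG_summable)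
  have sm: "strict_mono (\<lambda>k. N + 2 * k)" by (rule strict_monoI) auto
  have z: "c m = 0" if "m \<notin> range (\<lambda>k. N + 2 * k)" for m
  proof -
    have "\<not> (\<exists>k\<le>m. int N = 2 * int k - int m)"
    proof
      assume "\<exists>k\<le>m. int N = 2 * int k - int m"
      then obtain k where "k \<le> m" "int N = 2 * int k - int m" by blast
      then have "m = N + 2 * (k - N)" by linarith
      then show False using that by blast
    qed
    then show ?thesis unfolding c_def by (simp add: JJ_zero)
  qed
  have "(\<lambda>k. c (N + 2 * k)) sums GG r n"
    using sums_mono_reindex[of "\<lambda>k. N + 2 * k" c, OF sm z] cs by blast
  moreover have "c (N + 2 * k) = (r / 2) ^ (2 * k + N) / (fact k * fact (k + N))" for k
  proof -
    have "JJ (N + 2 * k) (int N) = JJ (N + 2 * k) (2 * int (N + k) - int (N + 2 * k))" by simp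
    also have "\<dots> = real ((N + 2 * k) choose (N + k)) / 2 ^ (N + 2 * k)" by (rule JJ_val)
    also have "\<dots> = fact (N + 2 * k) / (fact (N + k) * fact k) / 2 ^ (N + 2 * k)"
      by (subst binomial_fact) (auto simp: algebra_simps)
    finally have j: "JJ (N + 2 * k) (int N) = fact (N + 2 * k) / (fact (N + k) * fact k) / 2 ^ (N + 2 * k)" .
    have fpos: "(fact (N + 2 * k) :: real) > 0" by simp
    have "c (N + 2 * k) = r ^ (N + 2 * k) / (2 ^ (N + 2 * k) * (fact (N + k) * fact k))"
      unfolding c_def j using fpos by (simp add: field_simps)
    also have "\<dots> = (r / 2) ^ (2 * k + N) / (fact k * fact (k + N))"
      by (simp add: power_divide add.commute mult.commute)
    finally show ?thesis .
  qed
  ultimately have "(\<lambda>k. (r / 2) ^ (2 * k + N) / (fact k * fact (k + N))) sums GG r n" by simp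
  then show ?thesis unfolding heat_kernel_def N_def by (simp add: sums_iff)
qed

lemma GG_nonneg: "r \<ge> 0 \<Longrightarrow> GG r n \<ge> 0"
  unfolding GG_def by (rule suminf_nonneg[OF GG_summable]) (simp add: JJ_nonneg)

lemma heat_nonneg: "r \<ge> 0 \<Longrightarrow> heat_kernel r n \<ge> 0"
  by (simp add: heat_GG GG_nonneg)


lemma GG_deriv: "((\<lambda>r. GG r n) has_real_derivative (GG r (n+1) + GG r (n-1)) / 2) (at r)"
proof -
  define c where "c m = JJ m n / fact m" for m
  have s: "\<And>y. summable (\<lambda>m. c m * y ^ m)" unfolding c_def by (rule GG_summable)
  have d: "((\<lambda>r. \<Sum>m. c m * r ^ m) has_real_derivative (\<Sum>m. diffs c m * r ^ m)) (at r)"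
    by (rule termdiffs_strong_converges_everywhere[OF s])
  have dc: "diffs c m * r ^ m = (JJ m (n+1) / fact m * r ^ m) / 2 + (JJ m (n-1) / fact m * r ^ m) / 2" for m
  proof -
    have "diffs c m = real (Suc m) * (JJ (Suc m) n / (real (Suc m) * fact m))"
      unfolding diffs_def c_def by simp
    also have "\<dots> = JJ (Suc m) n / fact m" by simp
    finally have "diffs c m = JJ (Suc m) n / fact m" .
    then show ?thesis by (simp add: JJ_Suc add_divide_distrib algebra_simps)
  qed
  have "(\<Sum>m. diffs c m * r ^ m) = (\<Sum>m. (JJ m (n+1) / fact m * r ^ m) / 2 + (JJ m (n-1) / fact m * r ^ m) / 2)"
    by (simp only: dc)
  also have "\<dots> = (\<Sum>m. (JJ m (n+1) / fact m * r ^ m) / 2) + (\<Sum>m. (JJ m (n-1) / fact m * r ^ m) / 2)"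
    by (rule suminf_add[symmetric]) (rule summable_divide[OF GG_summable])+
  also have "\<dots> = (GG r (n+1) + GG r (n-1)) / 2"
    unfolding GG_def by (simp only: suminf_divide[OF GG_summable] add_divide_distrib)
  finally have E: "(\<Sum>m. diffs c m * r ^ m) = (GG r (n+1) + GG r (n-1)) / 2" .
  have "(\<lambda>r. GG r n) = (\<lambda>r. \<Sum>m. c m * r ^ m)" unfolding c_def GG_def by (rule refl)
  then show ?thesis unfolding E[symmetric] using d by simp
qed

definition lap :: "real \<Rightarrow> int \<Rightarrow> real" where
  "lap r n = (heat_kernel r (n+1) + heat_kernel r (n-1)) / 2 - heat_kernel r n"

lemma heat_deriv: "((\<lambda>r. heat_kernel r n) has_real_derivative lap r n) (at r)"
proof -
  have "((\<lambda>r. exp (- r) * GG r n) has_real_derivative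
      (exp (- r) * (-1) * GG r n + exp (- r) * ((GG r (n+1) + GG r (n-1)) / 2))) (at r)"
  proof -
    have e: "((\<lambda>r. exp (- r)) has_real_derivative exp (- r) * (-1)) (at r)"
      by (auto intro!: derivative_eq_intros)
    show ?thesis by (rule DERIV_mult'[OF e GG_deriv, THEN DERIV_cong]) (simp add: algebra_simps)
  qed
  note D = this
  have eq: "exp (- r) * (-1) * GG r n + exp (- r) * ((GG r (n+1) + GG r (n-1)) / 2) = lap r n"
    unfolding lap_def heat_GG by (simp add: field_simps)
  have "(\<lambda>r. heat_kernel r n) = (\<lambda>r. exp (- r) * GG r n)" by (rule ext) (rule heat_GG)
  then show ?thesis using D eq by simp
qed

lemma heat_fourier:
  "heat_kernel r n = integral {-pi..pi} (\<lambda>\<theta>. exp (- r * (1 - cos \<theta>)) * cos (of_int n * \<theta>)) / (2*pi)"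
proof -
  define f where "f i \<theta> = inverse (fact i) * (r * cos \<theta>) ^ i * cos (of_int n * \<theta>)" for i \<theta>
  define M where "M i = inverse (fact i) * \<bar>r\<bar> ^ i" for i
  have M: "norm (f i \<theta>) \<le> M i" for i \<theta>
  proof -
    have "norm (f i \<theta>) = inverse (fact i) * (\<bar>r\<bar> ^ i * (\<bar>cos \<theta>\<bar> ^ i * \<bar>cos (of_int n * \<theta>)\<bar>))"
      unfolding f_def by (simp add: abs_mult power_abs power_mult_distrib)
    also have "\<dots> \<le> inverse (fact i) * (\<bar>r\<bar> ^ i * (1 * 1))"
      by (intro mult_left_mono mult_mono power_le_one) auto
    finally show ?thesis unfolding M_def by simp
  qed
  have sM: "summable M" unfolding M_def by (rule summable_exp)
  have lim: "suminf (\<lambda>i. f i \<theta>) = exp (r * cos \<theta>) * cos (of_int n * \<theta>)" for \<theta>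
  proof -
    have "(\<lambda>i. inverse (fact i) * (r * cos \<theta>) ^ i) sums exp (r * cos \<theta>)"
      using exp_converges[of "r * cos \<theta>"] by (simp add: divide_inverse mult.commute)
    then have "(\<lambda>i. inverse (fact i) * (r * cos \<theta>) ^ i * cos (of_int n * \<theta>)) sums (exp (r * cos \<theta>) * cos (of_int n * \<theta>))"
      by (rule sums_mult2)
    then show ?thesis unfolding f_def by (simp add: sums_iff)
  qed
  have ul: "uniform_limit {-pi..pi} (\<lambda>N \<theta>. \<Sum>i<N. f i \<theta>) (\<lambda>\<theta>. exp (r * cos \<theta>) * cos (of_int n * \<theta>)) sequentially"
    using Weierstrass_m_test[of "{-pi..pi}" f M, OF M sM] by (simp add: lim)
  have cont: "continuous_on {-pi..pi} (\<lambda>\<theta>. \<Sum>i<N. f i \<theta>)" for N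
    unfolding f_def by (intro continuous_intros)
  obtain I J where I: "\<And>N. ((\<lambda>\<theta>. \<Sum>i<N. f i \<theta>) has_integral I N) {-pi..pi}"
    and J: "((\<lambda>\<theta>. exp (r * cos \<theta>) * cos (of_int n * \<theta>)) has_integral J) {-pi..pi}"
    and IJ: "I \<longlonglongrightarrow> J"
    using uniform_limit_integral[OF ul cont] by auto
  have fi: "(f i has_integral (inverse (fact i) * r ^ i * (2 * pi * JJ i n))) {-pi..pi}" for i
  proof -
    have "((\<lambda>\<theta>. cos \<theta> ^ i * cos (of_int n * \<theta>)) has_integral (2 * pi * JJ i n)) {-pi..pi}"
      unfolding JJ_def by (simp add: integrable_integral int_cont continuous_intros)
    then have "((\<lambda>\<theta>. (inverse (fact i) * r ^ i) * (cos \<theta> ^ i * cos (of_int n * \<theta>))) has_integral (inverse (fact i) * r ^ i) * (2 * pi * JJ i n)) {-pi..pi}"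
      by (rule has_integral_mult_right)
    then show ?thesis unfolding f_def by (simp add: power_mult_distrib mult_ac)
  qed
  have "((\<lambda>\<theta>. \<Sum>i<N. f i \<theta>) has_integral (\<Sum>i<N. inverse (fact i) * r ^ i * (2 * pi * JJ i n))) {-pi..pi}" for N
    by (rule has_integral_sum) (auto intro: fi)
  then have IN: "I N = (\<Sum>i<N. inverse (fact i) * r ^ i * (2 * pi * JJ i n))" for N
    using I has_integral_unique by blast
  have "(\<lambda>i. 2 * pi * (JJ i n / fact i * r ^ i)) sums (2 * pi * GG r n)"
    unfolding GG_def by (rule sums_mult[OF summable_sums[OF GG_summable]])
  then have "I \<longlonglongrightarrow> 2 * pi * GG r n"
    unfolding IN sums_def by (simp add: divide_inverse mult_ac)
  then have JG: "J = 2 * pi * GG r n" using IJ LIMSEQ_unique by blast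
  have "((\<lambda>\<theta>. exp (- r) * (exp (r * cos \<theta>) * cos (of_int n * \<theta>))) has_integral exp (- r) * J) {-pi..pi}"
    by (rule has_integral_mult_right[OF J])
  moreover have "(\<lambda>\<theta>. exp (- r) * (exp (r * cos \<theta>) * cos (of_int n * \<theta>))) = (\<lambda>\<theta>. exp (- r * (1 - cos \<theta>)) * cos (of_int n * \<theta>))"
    by (rule ext) (simp add: exp_add[symmetric] algebra_simps)
  ultimately have "integral {-pi..pi} (\<lambda>\<theta>. exp (- r * (1 - cos \<theta>)) * cos (of_int n * \<theta>)) = exp (- r) * J"
    using integral_unique by metis
  then show ?thesis unfolding heat_GG JG by simp
qed


lemma cos_lb_pos: "0 \<le> x \<Longrightarrow> 1 - x\<^sup>2 / 2 \<le> cos (x::real)"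
proof -
  assume x: "0 \<le> x"
  have "(\<lambda>x. cos x - 1 + x\<^sup>2 / 2) 0 \<le> (\<lambda>x. cos x - 1 + x\<^sup>2 / 2) x"
  proof (rule DERIV_nonneg_imp_nondecreasing[OF x])
    fix y :: real assume "0 \<le> y" "y \<le> x"
    show "\<exists>d. ((\<lambda>x. cos x - 1 + x\<^sup>2 / 2) has_real_derivative d) (at y) \<and> d \<ge> 0"
      using abs_sin_x_le_abs_x[of y] \<open>0 \<le> y\<close>
      by (intro exI[of _ "- sin y + y"] conjI) (auto intro!: derivative_eq_intros)
  qed
  then show ?thesis by simp
qed

lemma cos_lb: "1 - x\<^sup>2 / 2 \<le> cos (x::real)"
  using cos_lb_pos[of "\<bar>x\<bar>"] by simp

lemma sin_lb_pos: "0 \<le> x \<Longrightarrow> x - x ^ 3 / 6 \<le> sin (x::real)"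
proof -
  assume x: "0 \<le> x"
  have "(\<lambda>x. sin x - x + x ^ 3 / 6) 0 \<le> (\<lambda>x. sin x - x + x ^ 3 / 6) x"
  proof (rule DERIV_nonneg_imp_nondecreasing[OF x])
    fix y :: real assume "0 \<le> y" "y \<le> x"
    show "\<exists>d. ((\<lambda>x. sin x - x + x ^ 3 / 6) has_real_derivative d) (at y) \<and> d \<ge> 0"
      using cos_lb[of y]
      by (intro exI[of _ "cos y - 1 + y\<^sup>2 / 2"] conjI) (auto intro!: derivative_eq_intros simp: power2_eq_square)
  qed
  then show ?thesis by simp
qed

lemma cos_ub_pos: "0 \<le> x \<Longrightarrow> cos (x::real) \<le> 1 - x\<^sup>2 / 2 + x ^ 4 / 24"
proof -
  assume x: "0 \<le> x"
  have "(\<lambda>x. 1 - x\<^sup>2 / 2 + x ^ 4 / 24 - cos x) 0 \<le> (\<lambda>x. 1 - x\<^sup>2 / 2 + x ^ 4 / 24 - cos x) x"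
  proof (rule DERIV_nonneg_imp_nondecreasing[OF x])
    fix y :: real assume "0 \<le> y" "y \<le> x"
    show "\<exists>d. ((\<lambda>x. 1 - x\<^sup>2 / 2 + x ^ 4 / 24 - cos x) has_real_derivative d) (at y) \<and> d \<ge> 0"
      using sin_lb_pos[OF \<open>0 \<le> y\<close>]
      by (intro exI[of _ "- y + y ^ 3 / 6 + sin y"] conjI) (auto intro!: derivative_eq_intros simp: power2_eq_square power3_eq_cube power4_eq_xxxx)
  qed
  then show ?thesis by simp
qed

lemma one_minus_cos_lb: "\<bar>x\<bar> \<le> pi \<Longrightarrow> x\<^sup>2 / 12 \<le> 1 - cos (x::real)"
proof -
  assume x: "\<bar>x\<bar> \<le> pi"
  have c: "cos x \<le> 1 - x\<^sup>2 / 2 + x ^ 4 / 24" using cos_ub_pos[of "\<bar>x\<bar>"] by (simp add: power_abs)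
  have "x\<^sup>2 \<le> pi\<^sup>2" using x by (metis abs_ge_zero power2_abs power_mono)
  also have "pi\<^sup>2 \<le> 10"
  proof -
    have "pi * pi \<le> 3.15 * 3.15" by (rule mult_mono) (use pi_approx(2) pi_gt3 in auto)
    then show ?thesis by (simp add: power2_eq_square)
  qed
  finally have "x\<^sup>2 \<le> 10" .
  then have "x\<^sup>2 * x\<^sup>2 \<le> 10 * x\<^sup>2" by (rule mult_right_mono) simp
  then have "x ^ 4 / 24 \<le> x\<^sup>2 * 10 / 24"
    by (simp add: power4_eq_xxxx power2_eq_square mult.assoc)
  then show ?thesis using c by simp
qed

lemma one_minus_cos_ub: "1 - cos (x::real) \<le> x\<^sup>2 / 2"
  using cos_lb[of x] by simp

lemma cos_lip: "\<bar>cos (a::real) - cos b\<bar> \<le> \<bar>a - b\<bar>"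
proof -
  have "\<bar>cos a - cos b\<bar> = 2 * \<bar>sin ((a + b) / 2)\<bar> * \<bar>sin ((b - a) / 2)\<bar>"
    by (simp add: cos_diff_cos abs_mult)
  also have "\<dots> \<le> 2 * 1 * \<bar>(b - a) / 2\<bar>"
    by (intro mult_mono abs_sin_x_le_abs_x) auto
  finally show ?thesis by simp
qed

lemma arctan_integral:
  assumes b: "b > 0"
  shows "((\<lambda>\<theta>. 1 / (1 + b * \<theta>\<^sup>2)) has_integral (2 * arctan (sqrt b * pi) / sqrt b)) {-pi..pi}"
proof -
  have sb: "sqrt b > 0" using b by simp
  have d: "((\<lambda>\<theta>. arctan (sqrt b * \<theta>) / sqrt b) has_vector_derivative 1 / (1 + b * \<theta>\<^sup>2)) (at \<theta> within {-pi..pi})" for \<theta>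
  proof -
    have g: "((\<lambda>\<theta>. sqrt b * \<theta>) has_real_derivative sqrt b) (at \<theta> within {-pi..pi})"
      by (auto intro!: derivative_eq_intros)
    have D0: "((\<lambda>\<theta>. arctan (sqrt b * \<theta>)) has_real_derivative inverse (1 + (sqrt b * \<theta>)\<^sup>2) * sqrt b) (at \<theta> within {-pi..pi})"
      by (rule DERIV_chain2[where f=arctan, OF DERIV_arctan g])
    have "((\<lambda>\<theta>. arctan (sqrt b * \<theta>) / sqrt b) has_real_derivative inverse (1 + (sqrt b * \<theta>)\<^sup>2) * sqrt b / sqrt b) (at \<theta> within {-pi..pi})"
      by (rule DERIV_cdivide[OF D0])
    moreover have "inverse (1 + (sqrt b * \<theta>)\<^sup>2) * sqrt b / sqrt b = 1 / (1 + b * \<theta>\<^sup>2)"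
    proof -
      have "(sqrt b * \<theta>)\<^sup>2 = b * \<theta>\<^sup>2" using b by (simp add: power_mult_distrib)
      moreover have "inverse (1 + (sqrt b * \<theta>)\<^sup>2) * sqrt b / sqrt b = inverse (1 + (sqrt b * \<theta>)\<^sup>2)"
        using sb by simp
      ultimately show ?thesis by (simp add: divide_inverse)
    qed
    ultimately show ?thesis by (simp add: has_real_derivative_iff_has_vector_derivative)
  qed
  have "((\<lambda>\<theta>. 1 / (1 + b * \<theta>\<^sup>2)) has_integral (arctan (sqrt b * pi) / sqrt b - arctan (sqrt b * (-pi)) / sqrt b)) {-pi..pi}"
    by (rule fundamental_theorem_of_calculus) (auto intro: d)
  then show ?thesis by (simp add: arctan_minus)
qed

lemma bound_by_arctan:
  assumes b: "b > 0" and K: "K \<ge> 0"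
    and cg: "continuous_on {-pi..pi} g"
    and le: "\<And>\<theta>. \<theta> \<in> {-pi..pi} \<Longrightarrow> g \<theta> \<le> K / (1 + b * \<theta>\<^sup>2)"
  shows "integral {-pi..pi} g \<le> K * pi / sqrt b"
proof -
  have hi: "((\<lambda>\<theta>. K * (1 / (1 + b * \<theta>\<^sup>2))) has_integral K * (2 * arctan (sqrt b * pi) / sqrt b)) {-pi..pi}"
    by (rule has_integral_mult_right[OF arctan_integral[OF b]])
  have "integral {-pi..pi} g \<le> K * (2 * arctan (sqrt b * pi) / sqrt b)"
    using le by (intro has_integral_le[OF integrable_integral[OF int_cont[OF cg]] hi]) auto
  also have "\<dots> \<le> K * (pi / sqrt b)"
    using arctan_ubound[of "sqrt b * pi"] b K
    by (intro mult_left_mono) (auto simp: divide_right_mono)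
  finally show ?thesis by simp
qed


definition ww :: "real \<Rightarrow> real \<Rightarrow> real" where
  "ww r \<theta> = exp (- r * (1 - cos \<theta>))"

lemma ww_cont[continuous_intros]: "continuous_on S (ww r)"
  unfolding ww_def by (intro continuous_intros)

lemma ww_pos: "ww r \<theta> > 0" by (simp add: ww_def)

lemma ww_le1: "r \<ge> 0 \<Longrightarrow> ww r \<theta> \<le> 1"
  unfolding ww_def using cos_le_one[of \<theta>] by (simp add: mult_nonneg_nonneg)

lemma ww_gauss: "r \<ge> 0 \<Longrightarrow> \<theta> \<in> {-pi..pi} \<Longrightarrow> ww r \<theta> \<le> exp (- (r / 12) * \<theta>\<^sup>2)"
proof -
  assume r: "r \<ge> 0" and t: "\<theta> \<in> {-pi..pi}"
  have "\<theta>\<^sup>2 / 12 \<le> 1 - cos \<theta>" using t by (intro one_minus_cos_lb) auto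
  then have "r * (\<theta>\<^sup>2 / 12) \<le> r * (1 - cos \<theta>)" using r by (rule mult_left_mono)
  then show ?thesis unfolding ww_def by simp
qed

lemma exp_inv_bound: "(u::real) \<ge> 0 \<Longrightarrow> exp (- u) \<le> 1 / (1 + u)"
proof -
  assume u: "u \<ge> 0"
  have "1 + u \<le> exp u" by (rule exp_ge_add_one_self)
  then show ?thesis using u by (simp add: exp_minus field_simps)
qed

lemma heat_F: "heat_kernel r n = integral {-pi..pi} (\<lambda>\<theta>. ww r \<theta> * cos (of_int n * \<theta>)) / (2*pi)"
  unfolding ww_def by (rule heat_fourier)

lemma intg: "(\<lambda>\<theta>. ww r \<theta> * g \<theta>) integrable_on {-pi..pi}" if "continuous_on {-pi..pi} g"
  using that by (intro int_cont continuous_intros)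

lemma E0: "r \<ge> 0 \<Longrightarrow> integral {-pi..pi} (ww r) \<le> 2 * pi"
proof -
  assume r: "r \<ge> 0"
  have "integral {-pi..pi} (ww r) \<le> integral {-pi..pi} (\<lambda>\<theta>. 1::real)"
    using r by (intro integral_le int_cont ww_cont continuous_intros ww_le1) auto
  then show ?thesis by simp
qed

lemma E0': "r > 0 \<Longrightarrow> integral {-pi..pi} (ww r) \<le> 1 * pi / sqrt (r / 12)"
proof -
  assume r: "r > 0"
  show ?thesis
  proof (rule bound_by_arctan)
    fix \<theta> :: real assume t: "\<theta> \<in> {-pi..pi}"
    have "ww r \<theta> \<le> exp (- (r / 12 * \<theta>\<^sup>2))" using ww_gauss[OF _ t] r by simp
    also have "\<dots> \<le> 1 / (1 + r / 12 * \<theta>\<^sup>2)" by (rule exp_inv_bound) (use r in simp)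
    finally show "ww r \<theta> \<le> 1 / (1 + r / 12 * \<theta>\<^sup>2)" .
  qed (use r in \<open>auto intro: ww_cont\<close>)
qed

lemma E1: "r > 0 \<Longrightarrow> integral {-pi..pi} (\<lambda>\<theta>. ww r \<theta> * \<bar>\<theta>\<bar>) \<le> (1 / sqrt (r / 12)) * pi / sqrt (r / 12)"
proof -
  assume r: "r > 0"
  define b where "b = r / 12"
  have b: "b > 0" using r by (simp add: b_def)
  show ?thesis unfolding b_def[symmetric]
  proof (rule bound_by_arctan[OF b])
    fix \<theta> :: real assume t: "\<theta> \<in> {-pi..pi}"
    define y where "y = sqrt b * \<bar>\<theta>\<bar>"
    define u where "u = b * \<theta>\<^sup>2"
    have u: "u = y\<^sup>2" "u \<ge> 0" "y \<ge> 0" using b by (auto simp: u_def y_def power_mult_distrib)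
    have "(1 + u) / 2 - y = (y - 1)\<^sup>2 / 2" using u by (simp add: power2_eq_square field_simps)
    then have "y \<le> (1 + u) / 2" by (smt (verit) zero_le_power2 divide_nonneg_nonneg)
    then have "y * (1 + u) \<le> (1 + u) / 2 * (1 + u)" by (rule mult_right_mono) (use u in auto)
    then have "y * (1 + u) \<le> (1 + u) * (1 + u) / 2" by simp
    also have "\<dots> \<le> 1 + u + u\<^sup>2 / 2" by (simp add: power2_eq_square field_simps)
    also have "\<dots> \<le> exp u" by (rule exp_lower_Taylor_quadratic) (use u in simp)
    finally have yu: "y * (1 + u) \<le> exp u" .
    have "ww r \<theta> * \<bar>\<theta>\<bar> \<le> exp (- u) * \<bar>\<theta>\<bar>"
      using ww_gauss[OF _ t] r unfolding u_def b_def by (intro mult_right_mono) auto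
    also have "\<dots> = (y / sqrt b) * exp (- u)" using b by (simp add: y_def)
    also have "\<dots> \<le> (1 / sqrt b) / (1 + u)"
    proof -
      have "y * (1 + u) * exp (- u) \<le> exp u * exp (- u)" by (rule mult_right_mono[OF yu]) simp
      then have "y * exp (- u) * (1 + u) \<le> 1" by (simp add: exp_minus mult_ac)
      moreover have "0 < 1 + u" using u(2) by simp
      ultimately have "y * exp (- u) \<le> 1 / (1 + u)" by (simp add: pos_le_divide_eq)
      then have "(y * exp (- u)) / sqrt b \<le> (1 / (1 + u)) / sqrt b" by (rule divide_right_mono) (use b in auto)
      then show ?thesis by (simp add: mult.commute)
    qed
    finally show "ww r \<theta> * \<bar>\<theta>\<bar> \<le> (1 / sqrt b) / (1 + b * \<theta>\<^sup>2)" unfolding u_def .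
  qed (use b in \<open>auto intro!: continuous_intros\<close>)
qed

lemma E2: "r > 0 \<Longrightarrow> integral {-pi..pi} (\<lambda>\<theta>. ww r \<theta> * \<theta>\<^sup>2) \<le> (2 / (r / 12)) * pi / sqrt (r / 12)"
proof -
  assume r: "r > 0"
  define b where "b = r / 12"
  have b: "b > 0" using r by (simp add: b_def)
  show ?thesis unfolding b_def[symmetric]
  proof (rule bound_by_arctan[OF b])
    fix \<theta> :: real assume t: "\<theta> \<in> {-pi..pi}"
    define u where "u = b * \<theta>\<^sup>2"
    have u: "u \<ge> 0" using b by (auto simp: u_def)
    have "u * (1 + u) \<le> 2 * (1 + u + u\<^sup>2 / 2)" using u by (simp add: power2_eq_square field_simps)
    also have "\<dots> \<le> 2 * exp u" using exp_lower_Taylor_quadratic[OF u] by simp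
    finally have yu: "u * (1 + u) \<le> 2 * exp u" .
    have "ww r \<theta> * \<theta>\<^sup>2 \<le> exp (- u) * \<theta>\<^sup>2"
      using ww_gauss[OF _ t] r unfolding u_def b_def by (intro mult_right_mono) auto
    also have "\<dots> = (u / b) * exp (- u)" using b by (simp add: u_def)
    also have "\<dots> \<le> (2 / b) / (1 + u)"
    proof -
      have "u * exp (- u) \<le> 2 / (1 + u)"
        using yu u by (simp add: exp_minus field_simps)
      then have "(u * exp (- u)) / b \<le> (2 / (1 + u)) / b" by (rule divide_right_mono) (use b in auto)
      then show ?thesis by (simp add: mult.commute)
    qed
    finally show "ww r \<theta> * \<theta>\<^sup>2 \<le> (2 / b) / (1 + b * \<theta>\<^sup>2)" unfolding u_def .
  qed (use b in \<open>auto intro!: continuous_intros\<close>)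
qed


lemma sqrt12: "sqrt (12::real) \<le> 4"
proof -
  have "sqrt (12::real) \<le> sqrt 16" by (rule real_sqrt_le_mono) simp
  then show ?thesis by simp
qed

lemma absint: "continuous_on {-pi..pi} g \<Longrightarrow> (\<And>\<theta>. \<theta> \<in> {-pi..pi} \<Longrightarrow> \<bar>g \<theta>\<bar> \<le> ww r \<theta> * h \<theta>) \<Longrightarrow> continuous_on {-pi..pi} h
  \<Longrightarrow> \<bar>integral {-pi..pi} g\<bar> \<le> integral {-pi..pi} (\<lambda>\<theta>. ww r \<theta> * h \<theta>)"
  using integral_norm_bound_integral[of g "{-pi..pi}" "\<lambda>\<theta>. ww r \<theta> * h \<theta>"]
  by (auto intro!: int_cont continuous_intros)

lemma cos_cont: "continuous_on S (\<lambda>\<theta>::real. cos (of_int n * \<theta>))"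
  by (intro continuous_intros)

lemma HB1: "r \<ge> 0 \<Longrightarrow> \<bar>heat_kernel r n\<bar> \<le> 1"
proof -
  assume r: "r \<ge> 0"
  have "\<bar>integral {-pi..pi} (\<lambda>\<theta>. ww r \<theta> * cos (of_int n * \<theta>))\<bar> \<le> integral {-pi..pi} (\<lambda>\<theta>. ww r \<theta> * 1)"
    by (rule absint) (auto intro!: continuous_intros simp: abs_mult ww_pos less_imp_le)
  also have "\<dots> \<le> 2 * pi" using E0[OF r] by simp
  finally show ?thesis unfolding heat_F by (simp add: divide_le_eq)
qed

lemma HB2: "r > 0 \<Longrightarrow> \<bar>heat_kernel r n\<bar> \<le> 2 / sqrt r"
proof -
  assume r: "r > 0"
  have "\<bar>integral {-pi..pi} (\<lambda>\<theta>. ww r \<theta> * cos (of_int n * \<theta>))\<bar> \<le> integral {-pi..pi} (\<lambda>\<theta>. ww r \<theta> * 1)"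
    by (rule absint) (auto intro!: continuous_intros simp: abs_mult ww_pos less_imp_le)
  also have "\<dots> \<le> 1 * pi / sqrt (r / 12)" using E0'[OF r] by simp
  also have "\<dots> = pi * sqrt 12 / sqrt r" by (simp add: real_sqrt_divide)
  also have "\<dots> \<le> pi * 4 / sqrt r" using sqrt12 r by (intro divide_right_mono mult_left_mono) auto
  finally show ?thesis unfolding heat_F using r by (simp add: divide_le_eq field_simps)
qed

lemma int_diff_eq: "integral {-pi..pi} (\<lambda>\<theta>. ww r \<theta> * cos (of_int a * \<theta>)) - integral {-pi..pi} (\<lambda>\<theta>. ww r \<theta> * cos (of_int b * \<theta>))
   = integral {-pi..pi} (\<lambda>\<theta>. ww r \<theta> * cos (of_int a * \<theta>) - ww r \<theta> * cos (of_int b * \<theta>))"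
  by (rule integral_diff[symmetric]) (auto intro!: int_cont continuous_intros)

lemma HB3: "r > 0 \<Longrightarrow> \<bar>heat_kernel r (n+1) - heat_kernel r n\<bar> \<le> 6 / r"
proof -
  assume r: "r > 0"
  have "\<bar>integral {-pi..pi} (\<lambda>\<theta>. ww r \<theta> * cos (of_int (n+1) * \<theta>) - ww r \<theta> * cos (of_int n * \<theta>))\<bar>
      \<le> integral {-pi..pi} (\<lambda>\<theta>. ww r \<theta> * \<bar>\<theta>\<bar>)"
  proof (rule absint)
    fix \<theta> :: real
    have "\<bar>ww r \<theta> * cos (of_int (n+1) * \<theta>) - ww r \<theta> * cos (of_int n * \<theta>)\<bar> = ww r \<theta> * \<bar>cos (of_int (n+1) * \<theta>) - cos (of_int n * \<theta>)\<bar>"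
      using ww_pos[of r \<theta>] by (simp add: abs_mult right_diff_distrib[symmetric])
    also have "\<dots> \<le> ww r \<theta> * \<bar>of_int (n+1) * \<theta> - of_int n * \<theta>\<bar>"
      using ww_pos[of r \<theta>] by (intro mult_left_mono cos_lip) auto
    also have "\<dots> = ww r \<theta> * \<bar>\<theta>\<bar>" by (simp add: algebra_simps)
    finally show "\<bar>ww r \<theta> * cos (of_int (n+1) * \<theta>) - ww r \<theta> * cos (of_int n * \<theta>)\<bar> \<le> ww r \<theta> * \<bar>\<theta>\<bar>" .
  qed (auto intro!: continuous_intros)
  also have "\<dots> \<le> (1 / sqrt (r / 12)) * pi / sqrt (r / 12)" by (rule E1[OF r])
  also have "\<dots> = pi * 12 / r" using r by (simp add: field_simps)
  finally have "\<bar>integral {-pi..pi} (\<lambda>\<theta>. ww r \<theta> * cos (of_int (n+1) * \<theta>)) - integral {-pi..pi} (\<lambda>\<theta>. ww r \<theta> * cos (of_int n * \<theta>))\<bar> \<le> pi * 12 / r"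
    unfolding int_diff_eq .
  then show ?thesis unfolding heat_F using r
    by (simp add: diff_divide_distrib[symmetric] divide_le_eq field_simps)
qed

lemma lap_F: "lap r n = integral {-pi..pi} (\<lambda>\<theta>. ww r \<theta> * (cos (of_int n * \<theta>) * (cos \<theta> - 1))) / (2 * pi)"
proof -
  let ?I = "\<lambda>a. integral {-pi..pi} (\<lambda>\<theta>. ww r \<theta> * cos (of_int a * \<theta>))"
  have "(?I (n+1) + ?I (n-1)) / 2 - ?I n
      = integral {-pi..pi} (\<lambda>\<theta>. (ww r \<theta> * cos (of_int (n+1) * \<theta>) + ww r \<theta> * cos (of_int (n-1) * \<theta>)) / 2 - ww r \<theta> * cos (of_int n * \<theta>))"
    by (subst integral_diff integral_add integral_divide; (auto intro!: int_cont continuous_intros)?)+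
  also have "\<dots> = integral {-pi..pi} (\<lambda>\<theta>. ww r \<theta> * (cos (of_int n * \<theta>) * (cos \<theta> - 1)))"
  proof (rule integral_cong)
    fix \<theta> :: real
    have "cos (of_int (n+1) * \<theta>) + cos (of_int (n-1) * \<theta>) = 2 * (cos \<theta> * cos (of_int n * \<theta>))"
      by (simp add: cos_prod)
    then show "(ww r \<theta> * cos (of_int (n+1) * \<theta>) + ww r \<theta> * cos (of_int (n-1) * \<theta>)) / 2 - ww r \<theta> * cos (of_int n * \<theta>)
       = ww r \<theta> * (cos (of_int n * \<theta>) * (cos \<theta> - 1))"
      by (simp add: algebra_simps distrib_left[symmetric])
  qed
  finally show ?thesis unfolding lap_def heat_F by (simp add: field_simps)
qed

lemma HB4: "r > 0 \<Longrightarrow> \<bar>lap r n\<bar> \<le> 24 / (r * sqrt r)"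
proof -
  assume r: "r > 0"
  have "\<bar>integral {-pi..pi} (\<lambda>\<theta>. ww r \<theta> * (cos (of_int n * \<theta>) * (cos \<theta> - 1)))\<bar>
      \<le> integral {-pi..pi} (\<lambda>\<theta>. ww r \<theta> * (\<theta>\<^sup>2 / 2))"
  proof (rule absint)
    fix \<theta> :: real
    have "\<bar>cos (of_int n * \<theta>) * (cos \<theta> - 1)\<bar> \<le> 1 * (\<theta>\<^sup>2 / 2)"
      unfolding abs_mult using one_minus_cos_ub[of \<theta>] cos_le_one[of \<theta>]
      by (intro mult_mono) auto
    then have "ww r \<theta> * \<bar>cos (of_int n * \<theta>) * (cos \<theta> - 1)\<bar> \<le> ww r \<theta> * (\<theta>\<^sup>2 / 2)"
      using ww_pos[of r \<theta>] by (intro mult_left_mono) auto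
    moreover have "\<bar>ww r \<theta> * (cos (of_int n * \<theta>) * (cos \<theta> - 1))\<bar> = ww r \<theta> * \<bar>cos (of_int n * \<theta>) * (cos \<theta> - 1)\<bar>"
      using ww_pos[of r \<theta>] by (simp only: abs_mult abs_of_pos)
    ultimately show "\<bar>ww r \<theta> * (cos (of_int n * \<theta>) * (cos \<theta> - 1))\<bar> \<le> ww r \<theta> * (\<theta>\<^sup>2 / 2)" by simp
  qed (auto intro!: continuous_intros)
  also have "\<dots> = integral {-pi..pi} (\<lambda>\<theta>. ww r \<theta> * \<theta>\<^sup>2) / 2"
    by (simp add: mult.assoc[symmetric])
  also have "\<dots> \<le> ((2 / (r / 12)) * pi / sqrt (r / 12)) / 2" by (rule divide_right_mono[OF E2[OF r]]) simp
  also have "\<dots> = pi * 12 * sqrt 12 / (r * sqrt r)" using r by (simp add: real_sqrt_divide field_simps)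
  also have "\<dots> \<le> pi * 12 * 4 / (r * sqrt r)" using sqrt12 r by (intro divide_right_mono mult_left_mono) auto
  finally show ?thesis unfolding lap_F using r by (simp add: divide_le_eq field_simps)
qed

lemma aux_avg: "\<bar>a\<bar> \<le> 1 \<Longrightarrow> \<bar>b\<bar> \<le> 1 \<Longrightarrow> \<bar>c\<bar> \<le> 1 \<Longrightarrow> \<bar>(a + b) / 2 - c\<bar> \<le> (2::real)"
  by (auto simp: abs_le_iff field_simps)

lemma HB5: assumes "r \<ge> 0" shows "\<bar>lap r n\<bar> \<le> 2"
  unfolding lap_def using HB1[OF assms, of "n+1"] HB1[OF assms, of "n-1"] HB1[OF assms, of n] by (rule aux_avg)

lemma HB6: assumes "r \<ge> 0" shows "\<bar>heat_kernel r (n+1) - heat_kernel r n\<bar> \<le> 2"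
  using HB1[OF assms, of "n+1"] HB1[OF assms, of n] by simp


lemma JJ_expsum:
  fixes lam :: real
  assumes lam: "lam > 0"
  shows "finite S \<Longrightarrow> (\<Sum>n\<in>S. lam powi n * JJ m n) \<le> ((lam + inverse lam) / 2) ^ m"
proof (induction m arbitrary: S)
  case 0
  then show ?case
    by (cases "0 \<in> S") (auto simp: JJ_0 sum.If_cases if_distrib cong: if_cong)
next
  case (Suc m)
  have inj1: "inj_on (\<lambda>n::int. n + 1) S" and inj2: "inj_on (\<lambda>n::int. n - 1) S" by (auto simp: inj_on_def)
  have a: "(\<Sum>n\<in>S. lam powi n * JJ m (n+1)) = inverse lam * (\<Sum>k\<in>(\<lambda>n. n + 1) ` S. lam powi k * JJ m k)"
    unfolding sum.reindex[OF inj1] sum_distrib_left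
    using lam by (intro sum.cong refl) (simp add: power_int_add_1 field_simps)
  have b: "(\<Sum>n\<in>S. lam powi n * JJ m (n-1)) = lam * (\<Sum>k\<in>(\<lambda>n. n - 1) ` S. lam powi k * JJ m k)"
    unfolding sum.reindex[OF inj2] sum_distrib_left
    using lam by (intro sum.cong refl) (simp add: power_int_diff field_simps)
  have "(\<Sum>n\<in>S. lam powi n * JJ (Suc m) n) = ((\<Sum>n\<in>S. lam powi n * JJ m (n+1)) + (\<Sum>n\<in>S. lam powi n * JJ m (n-1))) / 2"
  proof -
    have "(\<Sum>n\<in>S. lam powi n * JJ (Suc m) n) = (\<Sum>n\<in>S. (lam powi n * JJ m (n+1) + lam powi n * JJ m (n-1)) / 2)"
      by (intro sum.cong refl) (simp add: JJ_Suc distrib_left)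
    also have "\<dots> = ((\<Sum>n\<in>S. lam powi n * JJ m (n+1)) + (\<Sum>n\<in>S. lam powi n * JJ m (n-1))) / 2"
      by (simp only: sum_divide_distrib[symmetric] sum.distrib)
    finally show ?thesis .
  qed
  also have "\<dots> \<le> (inverse lam * ((lam + inverse lam) / 2) ^ m + lam * ((lam + inverse lam) / 2) ^ m) / 2"
    unfolding a b using Suc lam
    by (intro divide_right_mono add_mono mult_left_mono) auto
  also have "\<dots> = ((lam + inverse lam) / 2) ^ Suc m" by (simp add: field_simps)
  finally show ?case .
qed

lemma heat_expsum:
  fixes lam :: real
  assumes lam: "lam > 0" and r: "r \<ge> 0" and S: "finite S"
  shows "(\<Sum>n\<in>S. lam powi n * heat_kernel r n) \<le> exp (r * ((lam + inverse lam) / 2 - 1))"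
proof -
  define q where "q = (lam + inverse lam) / 2"
  have "(\<Sum>n\<in>S. lam powi n * GG r n) = (\<Sum>n\<in>S. \<Sum>m. lam powi n * (JJ m n / fact m * r ^ m))"
    unfolding GG_def by (intro sum.cong refl suminf_mult[symmetric] GG_summable)
  also have "\<dots> = (\<Sum>m. \<Sum>n\<in>S. lam powi n * (JJ m n / fact m * r ^ m))"
    by (rule suminf_sum[symmetric]) (intro summable_mult GG_summable)
  also have "\<dots> \<le> (\<Sum>m. inverse (fact m) * (r * q) ^ m)"
  proof (rule suminf_le)
    fix m
    have "(\<Sum>n\<in>S. lam powi n * (JJ m n / fact m * r ^ m)) = (r ^ m / fact m) * (\<Sum>n\<in>S. lam powi n * JJ m n)"
      by (simp add: sum_distrib_left mult_ac)
    also have "\<dots> \<le> (r ^ m / fact m) * q ^ m"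
      unfolding q_def using r by (intro mult_left_mono JJ_expsum lam S) auto
    finally show "(\<Sum>n\<in>S. lam powi n * (JJ m n / fact m * r ^ m)) \<le> inverse (fact m) * (r * q) ^ m"
      by (simp add: power_mult_distrib divide_inverse mult_ac)
  next
    show "summable (\<lambda>m. \<Sum>n\<in>S. lam powi n * (JJ m n / fact m * r ^ m))"
      by (intro summable_sum summable_mult GG_summable)
  qed (rule summable_exp)
  also have "\<dots> = exp (r * q)"
    using exp_converges[of "r * q"] by (simp add: sums_iff divide_inverse mult.commute)
  finally have "(\<Sum>n\<in>S. lam powi n * GG r n) \<le> exp (r * q)" .
  then have "exp (- r) * (\<Sum>n\<in>S. lam powi n * GG r n) \<le> exp (- r) * exp (r * q)"
    by (intro mult_left_mono) auto
  then show ?thesis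
    unfolding heat_GG q_def by (simp add: sum_distrib_left mult_ac exp_add[symmetric] algebra_simps)
qed


definition SS :: "real \<Rightarrow> int \<Rightarrow> real \<Rightarrow> real" where
  "SS \<mu> c r = (\<Sum>j. \<mu> ^ j * heat_kernel r (c + int j))"

definition lamf :: "real \<Rightarrow> real" where "lamf \<mu> = max \<mu> (inverse \<mu>)"
definition kap :: "real \<Rightarrow> real" where "kap \<mu> = (\<mu> + inverse \<mu>) / 2 - 1"

lemma lamf_ge1: "\<mu> > 0 \<Longrightarrow> lamf \<mu> \<ge> 1"
  unfolding lamf_def by (simp add: le_max_iff_disj one_le_inverse_iff) linarith

lemma lamf_pos: "\<mu> > 0 \<Longrightarrow> lamf \<mu> > 0"
  using lamf_ge1 by force

lemma lamf_ge: "\<mu> \<le> lamf \<mu>" unfolding lamf_def by simp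

lemma lamf_sum: "lamf \<mu> + inverse (lamf \<mu>) = \<mu> + inverse \<mu>"
  unfolding lamf_def by (auto simp: max_def)

lemma SS_partial:
  assumes mu: "\<mu> > 0" and r: "r \<ge> 0"
  shows "(\<Sum>j<N. \<mu> ^ j * heat_kernel r (c + int j)) \<le> lamf \<mu> powi (- c) * exp (r * kap \<mu>)"
proof -
  define lam where "lam = lamf \<mu>"
  have lam: "lam \<ge> 1" "lam > 0" using lamf_ge1[OF mu] lamf_pos[OF mu] by (auto simp: lam_def)
  have "(\<Sum>j<N. \<mu> ^ j * heat_kernel r (c + int j)) \<le> (\<Sum>j<N. lam powi (- c) * (lam powi (c + int j) * heat_kernel r (c + int j)))"
  proof (rule sum_mono)
    fix j
    have "\<mu> ^ j \<le> lam ^ j" using mu lamf_ge[of \<mu>] by (intro power_mono) (auto simp: lam_def)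
    also have "\<dots> = lam powi (- c) * lam powi (c + int j)"
      using lam by (simp add: power_int_add[symmetric])
    finally show "\<mu> ^ j * heat_kernel r (c + int j) \<le> lam powi (- c) * (lam powi (c + int j) * heat_kernel r (c + int j))"
      using heat_nonneg[OF r] by (simp add: mult_right_mono mult.assoc[symmetric])
  qed
  also have "\<dots> = lam powi (- c) * (\<Sum>n\<in>(\<lambda>j. c + int j) ` {..<N}. lam powi n * heat_kernel r n)"
    by (subst sum.reindex) (auto simp: inj_on_def sum_distrib_left)
  also have "\<dots> \<le> lam powi (- c) * exp (r * ((lam + inverse lam) / 2 - 1))"
    using lam r by (intro mult_left_mono heat_expsum) auto
  finally show ?thesis unfolding lam_def lamf_sum kap_def .
qed

lemma SS_summable:
  assumes mu: "\<mu> > 0" and r: "r \<ge> 0"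
  shows "summable (\<lambda>j. \<mu> ^ j * heat_kernel r (c + int j))"
proof -
  have nn: "0 \<le> \<mu> ^ j * heat_kernel r (c + int j)" for j
    using mu heat_nonneg[OF r, of "c + int j"] by simp
  show ?thesis by (rule summableI_nonneg_bounded[OF nn SS_partial[OF mu r]])
qed

lemma SS_nonneg: "\<mu> > 0 \<Longrightarrow> r \<ge> 0 \<Longrightarrow> SS \<mu> c r \<ge> 0"
  unfolding SS_def by (intro suminf_nonneg SS_summable) (simp_all add: heat_nonneg)

lemma SS_bound: "\<mu> > 0 \<Longrightarrow> r \<ge> 0 \<Longrightarrow> SS \<mu> c r \<le> lamf \<mu> powi (- c) * exp (r * kap \<mu>)"
  unfolding SS_def by (intro suminf_le_const SS_summable SS_partial)

lemma SS_split:
  assumes mu: "\<mu> > 0" and r: "r \<ge> 0"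
  shows "SS \<mu> c r = heat_kernel r c + \<mu> * SS \<mu> (c+1) r"
proof -
  have "(\<Sum>j. \<mu> ^ Suc j * heat_kernel r (c + int (Suc j))) = SS \<mu> c r - heat_kernel r c"
    unfolding SS_def by (subst suminf_split_head[OF SS_summable[OF mu r]]) simp
  moreover have "(\<Sum>j. \<mu> ^ Suc j * heat_kernel r (c + int (Suc j))) = \<mu> * SS \<mu> (c+1) r"
    unfolding SS_def by (subst suminf_mult[OF SS_summable[OF mu r], symmetric]) (simp add: algebra_simps)
  ultimately show ?thesis by simp
qed

lemma GG_mono: "0 \<le> a \<Longrightarrow> a \<le> b \<Longrightarrow> GG a n \<le> GG b n"
  unfolding GG_def
  by (intro suminf_le GG_summable mult_left_mono power_mono divide_nonneg_pos JJ_nonneg) auto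

lemma GG_abs: "\<bar>GG a n\<bar> \<le> GG \<bar>a\<bar> n"
proof -
  have e: "(\<lambda>m. \<bar>JJ m n / fact m * a ^ m\<bar>) = (\<lambda>m. JJ m n / fact m * \<bar>a\<bar> ^ m)"
    using JJ_nonneg by (auto simp: abs_mult power_abs)
  show ?thesis unfolding GG_def using summable_rabs[of "\<lambda>m. JJ m n / fact m * a ^ m"] GG_summable[of n "\<bar>a\<bar>"]
    unfolding e by simp
qed

lemma heat_dom:
  assumes "-1 \<le> \<rho>" "\<rho> \<le> R0" "1 \<le> R0"
  shows "\<bar>heat_kernel \<rho> n\<bar> \<le> exp (1 + R0) * heat_kernel R0 n"
proof -
  have "\<bar>heat_kernel \<rho> n\<bar> = exp (- \<rho>) * \<bar>GG \<rho> n\<bar>" unfolding heat_GG by (simp add: abs_mult)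
  also have "\<dots> \<le> exp 1 * GG R0 n"
  proof (intro mult_mono)
    show "exp (- \<rho>) \<le> exp 1" using assms by simp
    have "\<bar>\<rho>\<bar> \<le> R0" using assms by auto
    then show "\<bar>GG \<rho> n\<bar> \<le> GG R0 n" using GG_abs[of \<rho> n] GG_mono[of "\<bar>\<rho>\<bar>" R0 n] by auto
  qed (use GG_nonneg[of R0 n] assms in auto)
  also have "\<dots> = exp (1 + R0) * heat_kernel R0 n" unfolding heat_GG by (simp add: exp_add exp_minus)
  finally show ?thesis .
qed


lemma SS_deriv:
  assumes mu: "\<mu> > 0" and r: "r \<ge> 0"
  shows "((\<lambda>r. SS \<mu> c r) has_real_derivative (\<Sum>j. \<mu> ^ j * lap r (c + int j))) (at r)"
proof -
  define R0 where "R0 = r + 1"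
  define K where "K = exp (1 + R0)"
  define S where "S = {-1..R0}"
  define M where "M j = K * (\<mu> ^ j * heat_kernel R0 ((c+1) + int j) + \<mu> ^ j * heat_kernel R0 ((c-1) + int j) + \<mu> ^ j * heat_kernel R0 (c + int j))" for j
  have R0: "R0 \<ge> 1" "R0 \<ge> 0" using r by (auto simp: R0_def)
  have d: "((\<lambda>r. \<mu> ^ j * heat_kernel r (c + int j)) has_field_derivative \<mu> ^ j * lap x (c + int j)) (at x within S)" for j x
    by (rule has_field_derivative_at_within, rule DERIV_cmult, rule heat_deriv)
  have M: "norm (\<mu> ^ j * lap x (c + int j)) \<le> M j" if x: "x \<in> S" for j x
  proof -
    have hd: "\<bar>heat_kernel x m\<bar> \<le> K * heat_kernel R0 m" for m
      unfolding K_def by (rule heat_dom) (use x R0 in \<open>auto simp: S_def\<close>)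
    have "\<bar>lap x (c + int j)\<bar> \<le> (\<bar>heat_kernel x (c + int j + 1)\<bar> + \<bar>heat_kernel x (c + int j - 1)\<bar>) / 2 + \<bar>heat_kernel x (c + int j)\<bar>"
      unfolding lap_def by (auto simp: abs_le_iff field_simps)
    also have "\<dots> \<le> (K * heat_kernel R0 (c + int j + 1) + K * heat_kernel R0 (c + int j - 1)) / 2 + K * heat_kernel R0 (c + int j)"
      by (intro add_mono divide_right_mono hd) auto
    also have "\<dots> \<le> K * heat_kernel R0 (c + int j + 1) + K * heat_kernel R0 (c + int j - 1) + K * heat_kernel R0 (c + int j)"
      using heat_nonneg[OF R0(2)] by (auto simp: K_def field_simps)
    finally have "\<bar>lap x (c + int j)\<bar> \<le> K * (heat_kernel R0 ((c+1) + int j) + heat_kernel R0 ((c-1) + int j) + heat_kernel R0 (c + int j))"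
      by (simp add: algebra_simps)
    then have "\<mu> ^ j * \<bar>lap x (c + int j)\<bar> \<le> \<mu> ^ j * (K * (heat_kernel R0 ((c+1) + int j) + heat_kernel R0 ((c-1) + int j) + heat_kernel R0 (c + int j)))"
      using mu by (intro mult_left_mono) auto
    then show ?thesis unfolding M_def using mu by (simp add: abs_mult algebra_simps)
  qed
  have sM: "summable M"
    unfolding M_def
    by (intro summable_mult summable_add SS_summable mu R0)
  have uc: "uniformly_convergent_on S (\<lambda>n x. \<Sum>i<n. \<mu> ^ i * lap x (c + int i))"
    by (rule Weierstrass_m_test'[OF M sM])
  have "(\<lambda>x. \<Sum>j. \<mu> ^ j * heat_kernel x (c + int j)) = (\<lambda>x. SS \<mu> c x)" by (simp add: SS_def fun_eq_iff)
  moreover have "((\<lambda>x. \<Sum>j. \<mu> ^ j * heat_kernel x (c + int j)) has_field_derivative (\<Sum>j. \<mu> ^ j * lap r (c + int j))) (at r)"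
    by (rule has_field_derivative_series'(2)[of S, OF _ d uc _ SS_summable[OF mu r]])
       (use r in \<open>auto simp: S_def R0_def\<close>)
  ultimately show ?thesis by simp
qed

lemma SS_deriv_val:
  assumes mu: "\<mu> > 0" and r: "r \<ge> 0"
  shows "(\<Sum>j. \<mu> ^ j * lap r (c + int j)) = kap \<mu> * SS \<mu> c r + (heat_kernel r (c - 1) - heat_kernel r c / \<mu>) / 2"
proof -
  have e: "\<mu> ^ j * lap r (c + int j) = (\<mu> ^ j * heat_kernel r ((c+1) + int j) / 2 + \<mu> ^ j * heat_kernel r ((c-1) + int j) / 2) - \<mu> ^ j * heat_kernel r (c + int j)" for j
    unfolding lap_def by (simp add: algebra_simps add_divide_distrib)
  have "(\<Sum>j. \<mu> ^ j * lap r (c + int j)) = (SS \<mu> (c+1) r / 2 + SS \<mu> (c-1) r / 2) - SS \<mu> c r"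
  proof -
    have sA: "summable (\<lambda>j. \<mu> ^ j * heat_kernel r ((c+1) + int j))" by (rule SS_summable[OF mu r])
    have sB: "summable (\<lambda>j. \<mu> ^ j * heat_kernel r ((c-1) + int j))" by (rule SS_summable[OF mu r])
    have sC: "summable (\<lambda>j. \<mu> ^ j * heat_kernel r (c + int j))" by (rule SS_summable[OF mu r])
    have sA2: "summable (\<lambda>j. \<mu> ^ j * heat_kernel r ((c+1) + int j) / 2)" by (rule summable_divide[OF sA])
    have sB2: "summable (\<lambda>j. \<mu> ^ j * heat_kernel r ((c-1) + int j) / 2)" by (rule summable_divide[OF sB])
    have "(\<Sum>j. \<mu> ^ j * lap r (c + int j)) = (\<Sum>j. \<mu> ^ j * heat_kernel r ((c+1) + int j) / 2 + \<mu> ^ j * heat_kernel r ((c-1) + int j) / 2) - (\<Sum>j. \<mu> ^ j * heat_kernel r (c + int j))"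
      unfolding e by (rule suminf_diff[symmetric, OF summable_add[OF sA2 sB2] sC])
    also have "\<dots> = ((\<Sum>j. \<mu> ^ j * heat_kernel r ((c+1) + int j) / 2) + (\<Sum>j. \<mu> ^ j * heat_kernel r ((c-1) + int j) / 2)) - (\<Sum>j. \<mu> ^ j * heat_kernel r (c + int j))"
      by (simp only: suminf_add[OF sA2 sB2])
    also have "\<dots> = (SS \<mu> (c+1) r / 2 + SS \<mu> (c-1) r / 2) - SS \<mu> c r"
      unfolding SS_def by (simp only: suminf_divide[OF sA] suminf_divide[OF sB])
    finally show ?thesis .
  qed
  also have "\<dots> = kap \<mu> * SS \<mu> c r + (heat_kernel r (c - 1) - heat_kernel r c / \<mu>) / 2"
  proof -
    have a: "SS \<mu> (c-1) r = heat_kernel r (c-1) + \<mu> * SS \<mu> c r" using SS_split[OF mu r, of "c-1"] by simp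
    have b: "SS \<mu> c r = heat_kernel r c + \<mu> * SS \<mu> (c+1) r" by (rule SS_split[OF mu r])
    have b': "SS \<mu> (c+1) r = (SS \<mu> c r - heat_kernel r c) / \<mu>" using b mu by (simp add: field_simps)
    show ?thesis unfolding a b' kap_def using mu by (simp add: field_simps)
  qed
  finally show ?thesis .
qed


lemma generic:
  fixes f f' :: "real \<Rightarrow> real"
  assumes d: "\<And>r. 0 \<le> r \<Longrightarrow> r \<le> L \<Longrightarrow> (f has_real_derivative f' r) (at r)"
    and b1: "\<And>r. 0 \<le> r \<Longrightarrow> r \<le> L \<Longrightarrow> \<bar>f r\<bar> \<le> K"
    and b2: "\<And>r. 0 < r \<Longrightarrow> r \<le> L \<Longrightarrow> \<bar>f r\<bar> \<le> K / sqrt r"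
    and b3: "\<And>r. 0 \<le> r \<Longrightarrow> r \<le> L \<Longrightarrow> \<bar>f' r\<bar> \<le> K"
    and b4: "\<And>r. 0 < r \<Longrightarrow> r \<le> L \<Longrightarrow> \<bar>f' r\<bar> \<le> K / (r * sqrt r)"
    and s: "0 \<le> s" and st: "s < t" and tL: "t \<le> L" and v: "0 \<le> v" "v \<le> 1"
  shows "\<bar>f t - f s\<bar> \<le> 2 * K * min_one_pow s v * (t - s) powr v"
proof -
  have K: "K \<ge> 0" using b1[of s] s st tL by auto
  obtain z where z: "s < z" "z < t" "f t - f s = (t - s) * f' z"
    using MVT2[OF st, of f f'] d s tL by (metis order.trans less_imp_le)
  have fz: "\<bar>f' z\<bar> \<le> K" using b3[of z] z s tL by auto
  have D1: "\<bar>f t - f s\<bar> \<le> (t - s) * K"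
    using z(3) fz st by (simp add: abs_mult mult_left_mono)
  have D2: "\<bar>f t - f s\<bar> \<le> 2 * K"
    using b1[of s] b1[of t] s st tL by auto
  have ts: "t - s > 0" using st by simp
  show ?thesis
  proof (cases "s < 1")
    case True
    have m: "min_one_pow s v = 1"
    proof (cases "s = 0")
      case False
      then have sp: "s > 0" using s by simp
      have "s powr 0 \<le> s powr (- 1 / 2 - v)"
        by (rule powr_mono') (use v sp True in auto)
      then have "1 \<le> s powr (- 1 / 2 - v)" using sp by simp
      then show ?thesis unfolding min_one_pow_def using False by simp
    qed (simp add: min_one_pow_def)
    show ?thesis
    proof (cases "t - s \<ge> 1")
      case True
      have "1 \<le> (t - s) powr v" by (rule ge_one_powr_ge_zero) (use True v in auto)
      then have "2 * K * 1 \<le> 2 * K * (t - s) powr v" using K by (intro mult_left_mono) auto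
      then show ?thesis using D2 m by simp
    next
      case False
      have "(t - s) powr 1 \<le> (t - s) powr v" by (rule powr_mono') (use False v ts in auto)
      then have "t - s \<le> (t - s) powr v" using ts by simp
      then have "(t - s) * K \<le> (t - s) powr v * K" using K by (rule mult_right_mono)
      then have A: "\<bar>f t - f s\<bar> \<le> (t - s) powr v * K" using D1 by linarith
      have nn: "0 \<le> (t - s) powr v * K" using K by simp
      have B: "(t - s) powr v * K \<le> 2 * K * (t - s) powr v"
        using nn by (simp only: mult.commute[of "(t - s) powr v" K] mult.assoc)
      have E: "2 * K * min_one_pow s v * (t - s) powr v = 2 * K * (t - s) powr v" by (simp add: m)
      show ?thesis unfolding E using order.trans[OF A B] .
    qed
  next
    case False
    then have s1: "s \<ge> 1" by simp
    then have sp: "s > 0" by simp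
    define q where "q = (t - s) / s"
    have qp: "q > 0" using ts sp by (simp add: q_def)
    have "s powr (- 1 / 2 - v) \<le> s powr 0" by (rule powr_mono) (use v s1 in auto)
    then have m: "min_one_pow s v = s powr (- 1 / 2 - v)" unfolding min_one_pow_def using sp by simp
    have rhs: "s powr (- 1 / 2 - v) * (t - s) powr v = q powr v / sqrt s"
    proof -
      have e1: "- 1 / 2 - v = - (1/2) + - v" by simp
      have "s powr (- 1 / 2 - v) = s powr (- (1/2)) * s powr (- v)"
        unfolding e1 by (rule powr_add)
      also have "\<dots> = inverse (sqrt s) * inverse (s powr v)"
        unfolding powr_minus using sp by (simp add: powr_half_sqrt)
      finally have e2: "s powr (- 1 / 2 - v) = inverse (sqrt s) * inverse (s powr v)" .
      have e3: "q powr v = (t - s) powr v / s powr v" unfolding q_def by (rule powr_divide)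
      show ?thesis unfolding e2 e3 by (simp add: divide_inverse mult_ac)
    qed
    have "\<bar>f t - f s\<bar> \<le> 2 * K * (q powr v / sqrt s)"
    proof (cases "q \<ge> 1")
      case True
      have "\<bar>f t - f s\<bar> \<le> K / sqrt t + K / sqrt s" using b2[of s] b2[of t] sp st tL by auto
      also have "K / sqrt t \<le> K / sqrt s" using K sp st by (intro divide_left_mono) auto
      finally have "\<bar>f t - f s\<bar> \<le> 2 * K / sqrt s" by simp
      also have "\<dots> \<le> 2 * K / sqrt s * q powr v"
      proof -
        have "1 \<le> q powr v" using ge_one_powr_ge_zero[of q v] True v by auto
        moreover have "0 \<le> 2 * K / sqrt s" using K sp by simp
        ultimately have "2 * K / sqrt s * 1 \<le> 2 * K / sqrt s * q powr v" by (rule mult_left_mono)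
        then show ?thesis by simp
      qed
      finally show ?thesis by simp
    next
      case False
      have "\<bar>f' z\<bar> \<le> K / (z * sqrt z)" using b4[of z] z sp tL by auto
      also have "\<dots> \<le> K / (s * sqrt s)"
        using K sp z by (intro divide_left_mono mult_mono) auto
      finally have fz2: "\<bar>f' z\<bar> \<le> K / (s * sqrt s)" .
      have "\<bar>f t - f s\<bar> = (t - s) * \<bar>f' z\<bar>" using z(3) ts by (simp add: abs_mult)
      also have "\<dots> \<le> (t - s) * (K / (s * sqrt s))" using fz2 ts by (intro mult_left_mono) auto
      finally have "\<bar>f t - f s\<bar> \<le> (t - s) * (K / (s * sqrt s))" .
      also have "\<dots> = K * q / sqrt s" unfolding q_def using sp by (simp add: field_simps)
      also have "\<dots> \<le> K * q powr v / sqrt s"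
      proof -
        have "q powr 1 \<le> q powr v" by (rule powr_mono') (use False v qp in auto)
        then have "q \<le> q powr v" using qp by simp
        then show ?thesis using K sp by (intro divide_right_mono mult_left_mono) auto
      qed
      also have "\<dots> \<le> 2 * K * (q powr v / sqrt s)" using K sp by (simp add: field_simps)
      finally show ?thesis .
    qed
    then show ?thesis unfolding m using rhs by (simp add: mult.assoc)
  qed
qed


lemma eps_sqrt:
  assumes e: "0 < \<epsilon>" and r: "0 < r" and rT: "r \<le> T / \<epsilon>\<^sup>2"
  shows "\<epsilon> \<le> sqrt T / sqrt r"
proof -
  have "\<epsilon>\<^sup>2 * r \<le> T" using rT e by (simp add: field_simps)
  then have "sqrt (\<epsilon>\<^sup>2 * r) \<le> sqrt T" by (rule real_sqrt_le_mono)
  then have "\<epsilon> * sqrt r \<le> sqrt T" using e r by (simp add: real_sqrt_mult)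
  then show ?thesis using r by (simp add: field_simps)
qed

lemma kap_bound:
  assumes mu: "1/2 \<le> \<mu>"
  shows "0 \<le> kap \<mu>" "kap \<mu> \<le> (\<mu> - 1)\<^sup>2"
proof -
  have mp: "\<mu> > 0" using mu by simp
  have e: "kap \<mu> = (\<mu> - 1)\<^sup>2 / (2 * \<mu>)" unfolding kap_def using mp by (simp add: field_simps power2_eq_square)
  show "0 \<le> kap \<mu>" unfolding e using mp by simp
  have "(\<mu> - 1)\<^sup>2 / (2 * \<mu>) \<le> (\<mu> - 1)\<^sup>2 / 1" using mu by (intro divide_left_mono) auto
  then show "kap \<mu> \<le> (\<mu> - 1)\<^sup>2" unfolding e by simp
qed

lemma SS_bound2:
  assumes mu: "\<mu> > 0" and r: "r \<ge> 0" and c: "c \<ge> 0"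
  shows "SS \<mu> c r \<le> exp (r * kap \<mu>)"
proof -
  have l: "lamf \<mu> \<ge> 1" by (rule lamf_ge1[OF mu])
  have "lamf \<mu> powi (- c) = inverse (lamf \<mu> ^ nat c)"
    using c by (simp add: power_int_minus power_int_def power_inverse)
  also have "\<dots> \<le> 1" using l by (simp add: inverse_le_1_iff one_le_power)
  finally have "lamf \<mu> powi (- c) \<le> 1" .
  then have P: "lamf \<mu> powi (- c) * exp (r * kap \<mu>) \<le> 1 * exp (r * kap \<mu>)" by (intro mult_right_mono) auto
  show ?thesis using order.trans[OF SS_bound[OF mu r, of c] P] by simp
qed


lemma robin_decomp:
  assumes mu: "muA A \<epsilon> > 0" and r: "r \<ge> 0"
  shows "robin_kernel A \<epsilon> r x y = heat_kernel r (int x - int y) + muA A \<epsilon> * heat_kernel r (int x + int y + 1)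
     + ((muA A \<epsilon>)\<^sup>2 - 1) * SS (muA A \<epsilon>) (int x + int y + 2) r"
proof -
  define \<mu> where "\<mu> = muA A \<epsilon>"
  have m: "\<mu> > 0" using mu by (simp add: \<mu>_def)
  have "(\<lambda>j. heat_kernel r (int x + int y + int (j + 2)) * \<mu> ^ (j + 2)) = (\<lambda>j. \<mu>\<^sup>2 * (\<mu> ^ j * heat_kernel r ((int x + int y + 2) + int j)))"
    by (rule ext) (simp add: power_add power2_eq_square algebra_simps)
  then have "(\<Sum>j. heat_kernel r (int x + int y + int (j + 2)) * \<mu> ^ (j + 2)) = \<mu>\<^sup>2 * SS \<mu> (int x + int y + 2) r"
    unfolding SS_def using suminf_mult[OF SS_summable[OF m r]] by simp
  moreover have "(1 - \<mu> powi (-2)) * \<mu>\<^sup>2 = \<mu>\<^sup>2 - 1"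
    using m by (simp add: power_int_minus field_simps)
  ultimately show ?thesis unfolding robin_kernel_def \<mu>_def[symmetric] by (simp add: algebra_simps)
qed

lemma f1_ok:
  assumes "0 \<le> s" "s < t" "0 \<le> v" "v \<le> 1"
  shows "\<bar>heat_kernel t n - heat_kernel s n\<bar> \<le> 2 * 24 * min_one_pow s v * (t - s) powr v"
proof (rule generic[where L = t and f' = "\<lambda>r. lap r n"])
  fix r :: real
  show "0 \<le> r \<Longrightarrow> r \<le> t \<Longrightarrow> ((\<lambda>r. heat_kernel r n) has_real_derivative lap r n) (at r)" by (rule heat_deriv)
  show "0 \<le> r \<Longrightarrow> r \<le> t \<Longrightarrow> \<bar>heat_kernel r n\<bar> \<le> 24" using HB1[of r n] by simp
  show "0 \<le> r \<Longrightarrow> r \<le> t \<Longrightarrow> \<bar>lap r n\<bar> \<le> 24" using HB5[of r n] by simp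
  show "0 < r \<Longrightarrow> r \<le> t \<Longrightarrow> \<bar>lap r n\<bar> \<le> 24 / (r * sqrt r)" using HB4[of r n] by simp
  assume r: "0 < r"
  have "2 / sqrt r \<le> 24 / sqrt r" using r by (intro divide_right_mono) auto
  then show "\<bar>heat_kernel r n\<bar> \<le> 24 / sqrt r" using HB2[OF r, of n] by simp
qed (use assms in auto)


definition K3 :: "real \<Rightarrow> real \<Rightarrow> real" where
  "K3 A T = 5/2 * (\<bar>A\<bar> * exp (A\<^sup>2 * T) * (1 + sqrt T) + \<bar>A\<bar> * (A\<^sup>2 * exp (A\<^sup>2 * T) + 1 + \<bar>A\<bar>)
     + ((\<bar>A\<bar> * sqrt T) ^ 3 * exp (A\<^sup>2 * T) + 3 * (\<bar>A\<bar> * sqrt T) + 2 * (\<bar>A\<bar> * sqrt T)\<^sup>2))"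

lemma f3_ok:
  fixes A T \<epsilon> :: real and w :: int
  assumes e: "0 < \<epsilon>" "\<epsilon> \<le> 1" and aeps: "\<bar>A\<bar> * \<epsilon> \<le> 1/2" and T: "T > 0" and w: "w \<ge> 0"
    and st: "0 \<le> s" "s < t" "t \<le> T / \<epsilon>\<^sup>2" and v: "0 \<le> v" "v \<le> 1"
    and mudef: "\<mu> = 1 - A * \<epsilon>"
  shows "\<bar>(\<mu>\<^sup>2 - 1) * SS \<mu> (w + 2) t - (\<mu>\<^sup>2 - 1) * SS \<mu> (w + 2) s\<bar> \<le> 2 * K3 A T * min_one_pow s v * (t - s) powr v"
proof -
  define a where "a = \<bar>A\<bar> * \<epsilon>"
  define E where "E = exp (A\<^sup>2 * T)"
  define B where "B = \<bar>A\<bar> * sqrt T"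
  define L where "L = T / \<epsilon>\<^sup>2"
  have a0: "a \<ge> 0" using e by (simp add: a_def)
  have a12: "a \<le> 1/2" using aeps by (simp add: a_def)
  have aA: "a \<le> \<bar>A\<bar>" using e unfolding a_def by (simp add: mult_left_le)
  have B0: "B \<ge> 0" using T by (simp add: B_def)
  have E0: "E > 0" by (simp add: E_def)
  have mu1: "\<bar>\<mu> - 1\<bar> = a" unfolding mudef a_def using e by (simp add: abs_mult)
  have mulo: "\<mu> \<ge> 1/2" and muhi: "\<mu> \<le> 3/2" using mu1 a12 by auto
  have mup: "\<mu> > 0" using mulo by simp
  have mm: "\<bar>\<mu>\<^sup>2 - 1\<bar> \<le> 5/2 * a"
  proof -
    have "\<bar>\<mu>\<^sup>2 - 1\<bar> = \<bar>\<mu> - 1\<bar> * \<bar>\<mu> + 1\<bar>" by (simp add: power2_eq_square abs_mult[symmetric] algebra_simps)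
    also have "\<dots> \<le> a * (5/2)" unfolding mu1 using a0 mulo muhi by (intro mult_left_mono) auto
    finally show ?thesis by simp
  qed
  have sqa: "(\<mu> - 1)\<^sup>2 = a\<^sup>2" using mu1 by (metis power2_abs)
  have kap0: "kap \<mu> \<ge> 0" and kapa: "kap \<mu> \<le> a\<^sup>2"
    using kap_bound[OF mulo] unfolding sqa by auto
  have inv: "\<bar>1 - 1 / \<mu>\<bar> \<le> 2 * a"
  proof -
    have "1 - 1 / \<mu> = (\<mu> - 1) / \<mu>" using mup by (simp add: diff_divide_distrib)
    then have "\<bar>1 - 1 / \<mu>\<bar> = \<bar>\<mu> - 1\<bar> / \<mu>" using mup by simp
    also have "\<dots> \<le> a / (1/2)" unfolding mu1 using mulo a0 by (intro divide_left_mono) auto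
    finally show ?thesis by simp
  qed
  have SSb: "0 \<le> SS \<mu> (w + 2) r \<and> SS \<mu> (w + 2) r \<le> E" if r: "0 \<le> r" "r \<le> L" for r
  proof
    show "0 \<le> SS \<mu> (w + 2) r" by (rule SS_nonneg[OF mup r(1)])
    have "r * kap \<mu> \<le> r * a\<^sup>2" using r kapa by (intro mult_left_mono) auto
    also have "\<dots> = (r * \<epsilon>\<^sup>2) * A\<^sup>2" by (simp add: a_def power_mult_distrib)
    also have "\<dots> \<le> T * A\<^sup>2" using r e unfolding L_def by (intro mult_right_mono) (auto simp: field_simps)
    finally have "exp (r * kap \<mu>) \<le> E" unfolding E_def by (simp add: mult.commute)
    then show "SS \<mu> (w + 2) r \<le> E" using SS_bound2[OF mup r(1), of "w+2"] w by simp
  qed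
  have aB: "a \<le> B / sqrt r" if r: "0 < r" "r \<le> L" for r
  proof -
    have "\<epsilon> \<le> sqrt T / sqrt r" by (rule eps_sqrt[OF e(1) r(1)]) (use r in \<open>simp add: L_def\<close>)
    then have "\<bar>A\<bar> * \<epsilon> \<le> \<bar>A\<bar> * (sqrt T / sqrt r)" by (intro mult_left_mono) auto
    then show ?thesis by (simp add: a_def B_def)
  qed
  define P1 where "P1 = \<bar>A\<bar> * E * (1 + sqrt T)"
  define P2 where "P2 = \<bar>A\<bar> * (A\<^sup>2 * E + 1 + \<bar>A\<bar>)"
  define P3 where "P3 = B ^ 3 * E + 3 * B + 2 * B\<^sup>2"
  have P1: "P1 \<ge> 0" unfolding P1_def using E0 T by simp
  have P2: "P2 \<ge> 0" unfolding P2_def using E0 by (simp add: add_nonneg_nonneg)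
  have P3: "P3 \<ge> 0" unfolding P3_def using E0 B0 by simp
  have K3e: "K3 A T = 5/2 * (P1 + P2 + P3)" unfolding K3_def P1_def P2_def P3_def E_def B_def by simp
  define X where "X r = kap \<mu> * SS \<mu> (w + 2) r + (heat_kernel r (w + 1) - heat_kernel r (w + 2) / \<mu>) / 2" for r
  have Xb: "\<bar>X r\<bar> \<le> a\<^sup>2 * E + \<bar>heat_kernel r (w + 1 + 1) - heat_kernel r (w + 1)\<bar> / 2 + a * \<bar>heat_kernel r (w + 2)\<bar>"
    if r: "0 \<le> r" "r \<le> L" for r
  proof -
    have eq: "X r = kap \<mu> * SS \<mu> (w + 2) r - (heat_kernel r (w + 1 + 1) - heat_kernel r (w + 1)) / 2 + heat_kernel r (w + 2) * (1 - 1 / \<mu>) / 2"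
      unfolding X_def by (simp add: field_simps)
    have t1: "\<bar>kap \<mu> * SS \<mu> (w + 2) r\<bar> \<le> a\<^sup>2 * E"
      using SSb[OF r] kap0 kapa by (simp add: abs_mult mult_mono)
    have t3: "\<bar>heat_kernel r (w + 2) * (1 - 1 / \<mu>) / 2\<bar> \<le> a * \<bar>heat_kernel r (w + 2)\<bar>"
    proof -
      have "\<bar>heat_kernel r (w + 2) * (1 - 1 / \<mu>) / 2\<bar> = \<bar>heat_kernel r (w + 2)\<bar> * \<bar>1 - 1 / \<mu>\<bar> / 2" by (simp add: abs_mult)
      also have "\<dots> \<le> \<bar>heat_kernel r (w + 2)\<bar> * (2 * a) / 2" by (intro divide_right_mono mult_left_mono inv) auto
      also have "\<dots> = a * \<bar>heat_kernel r (w + 2)\<bar>" by simp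
      finally show ?thesis .
    qed
    have t2: "\<bar>(heat_kernel r (w + 1 + 1) - heat_kernel r (w + 1)) / 2\<bar> = \<bar>heat_kernel r (w + 1 + 1) - heat_kernel r (w + 1)\<bar> / 2" by simp
    have "\<bar>X r\<bar> \<le> \<bar>kap \<mu> * SS \<mu> (w + 2) r\<bar> + \<bar>(heat_kernel r (w + 1 + 1) - heat_kernel r (w + 1)) / 2\<bar> + \<bar>heat_kernel r (w + 2) * (1 - 1 / \<mu>) / 2\<bar>"
      unfolding eq by (rule order.trans[OF abs_triangle_ineq add_right_mono[OF abs_triangle_ineq4]])
    then show ?thesis using t1 t2 t3 by linarith
  qed
  define f where "f r = (\<mu>\<^sup>2 - 1) * SS \<mu> (w + 2) r" for r
  define f' where "f' r = (\<mu>\<^sup>2 - 1) * X r" for r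
  have "\<bar>f t - f s\<bar> \<le> 2 * K3 A T * min_one_pow s v * (t - s) powr v"
  proof (rule generic[where L = L and f' = f'])
    fix r :: real
    assume r0: "0 \<le> r" and rL: "r \<le> L"
    have "((\<lambda>r. SS \<mu> (w + 2) r) has_real_derivative X r) (at r)"
      using SS_deriv[OF mup r0, of "w+2"] SS_deriv_val[OF mup r0, of "w+2"] unfolding X_def by (simp add: add.commute)
    then show "(f has_real_derivative f' r) (at r)" unfolding f_def f'_def by (rule DERIV_cmult)
    have fr: "\<bar>f r\<bar> \<le> 5/2 * a * E"
      unfolding f_def abs_mult using mm SSb[OF r0 rL] a0 by (intro mult_mono) auto
    have Kge1: "5/2 * a * E \<le> K3 A T"
    proof -
      have "5/2 * a * E \<le> 5/2 * \<bar>A\<bar> * E" using aA E0 by (intro mult_right_mono mult_left_mono) auto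
      also have "\<dots> \<le> 5/2 * (\<bar>A\<bar> * E * (1 + sqrt T))" using E0 T by (simp add: field_simps mult_left_le)
      also have "\<dots> \<le> K3 A T" unfolding K3e P1_def[symmetric] using P2 P3 by simp
      finally show ?thesis .
    qed
    show "\<bar>f r\<bar> \<le> K3 A T" using fr Kge1 by simp
    have Xr: "\<bar>X r\<bar> \<le> a\<^sup>2 * E + 1 + a"
    proof -
      have "\<bar>heat_kernel r (w + 1 + 1) - heat_kernel r (w + 1)\<bar> / 2 \<le> 1" using HB6[OF r0, of "w+1"] by simp
      moreover have "a * \<bar>heat_kernel r (w + 2)\<bar> \<le> a * 1" using HB1[OF r0, of "w+2"] a0 by (intro mult_left_mono) auto
      ultimately show ?thesis using Xb[OF r0 rL] by simp
    qed
    have "\<bar>f' r\<bar> \<le> 5/2 * a * (a\<^sup>2 * E + 1 + a)"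
      unfolding f'_def abs_mult using mm Xr a0 by (intro mult_mono) auto
    also have "\<dots> \<le> 5/2 * \<bar>A\<bar> * (A\<^sup>2 * E + 1 + \<bar>A\<bar>)"
    proof -
      have "a\<^sup>2 \<le> A\<^sup>2" using aA a0 by (metis abs_ge_zero power2_abs power_mono)
      then have "a\<^sup>2 * E + 1 + a \<le> A\<^sup>2 * E + 1 + \<bar>A\<bar>" using aA E0 by (intro add_mono mult_right_mono) auto
      then show ?thesis using aA a0 E0 by (intro mult_mono mult_left_mono) (auto intro!: add_nonneg_nonneg)
    qed
    also have "\<dots> = 5/2 * P2" by (simp add: P2_def)
    also have "\<dots> \<le> K3 A T" unfolding K3e using P1 P3 by simp
    finally show "\<bar>f' r\<bar> \<le> K3 A T" .
  next
    fix r :: real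
    assume rp: "0 < r" and rL: "r \<le> L"
    have r0: "0 \<le> r" using rp by simp
    have sr: "sqrt r > 0" using rp by simp
    have fr: "\<bar>f r\<bar> \<le> 5/2 * a * E"
      unfolding f_def abs_mult using mm SSb[OF r0 rL] a0 by (intro mult_mono) auto
    also have "\<dots> \<le> 5/2 * (B / sqrt r) * E" using aB[OF rp rL] E0 by (intro mult_right_mono mult_left_mono) auto
    also have "\<dots> = (5/2 * (\<bar>A\<bar> * E * sqrt T)) / sqrt r" by (simp add: B_def)
    also have "\<dots> \<le> K3 A T / sqrt r"
    proof (rule divide_right_mono)
      have "\<bar>A\<bar> * E * sqrt T \<le> \<bar>A\<bar> * E * (1 + sqrt T)" using E0 by (intro mult_left_mono) auto
      then have "\<bar>A\<bar> * E * sqrt T \<le> P1" by (simp add: P1_def)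
      then have "\<bar>A\<bar> * E * sqrt T \<le> P1 + P2 + P3" using P2 P3 by linarith
      then show "5/2 * (\<bar>A\<bar> * E * sqrt T) \<le> K3 A T" unfolding K3e by (rule mult_left_mono) simp
    qed (use sr in auto)
    finally show "\<bar>f r\<bar> \<le> K3 A T / sqrt r" .
    have Xr: "\<bar>X r\<bar> \<le> a\<^sup>2 * E + 3 / r + a * (2 / sqrt r)"
    proof -
      have "\<bar>heat_kernel r (w + 1 + 1) - heat_kernel r (w + 1)\<bar> / 2 \<le> 3 / r" using HB3[OF rp, of "w+1"] by simp
      moreover have "a * \<bar>heat_kernel r (w + 2)\<bar> \<le> a * (2 / sqrt r)" using HB2[OF rp, of "w+2"] a0 by (intro mult_left_mono) auto
      ultimately show ?thesis using Xb[OF r0 rL] by simp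
    qed
    have "\<bar>f' r\<bar> \<le> 5/2 * a * (a\<^sup>2 * E + 3 / r + a * (2 / sqrt r))"
      unfolding f'_def abs_mult using mm Xr a0 by (intro mult_mono) auto
    also have "\<dots> = 5/2 * (a ^ 3 * E + 3 * a / r + 2 * a\<^sup>2 / sqrt r)"
      by (simp add: algebra_simps power2_eq_square power3_eq_cube)
    also have "\<dots> \<le> 5/2 * (B ^ 3 * E / (r * sqrt r) + 3 * B / (r * sqrt r) + 2 * B\<^sup>2 / (r * sqrt r))"
    proof -
      have ab: "a \<le> B / sqrt r" by (rule aB[OF rp rL])
      have c1: "a ^ 3 \<le> (B / sqrt r) ^ 3" using ab a0 by (rule power_mono)
      have c2: "a\<^sup>2 \<le> (B / sqrt r)\<^sup>2" using ab a0 by (rule power_mono)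
      have sq: "sqrt r * sqrt r = r" using r0 by simp
      have e1: "(B / sqrt r) ^ 3 = B ^ 3 / (r * sqrt r)" using sq by (simp add: power_divide power3_eq_cube)
      have e2: "(B / sqrt r)\<^sup>2 / sqrt r = B\<^sup>2 / (r * sqrt r)" using sq by (simp add: power_divide power2_eq_square)
      have e3: "(B / sqrt r) / r = B / (r * sqrt r)" by simp
      have i1: "a ^ 3 * E \<le> B ^ 3 / (r * sqrt r) * E" using c1 E0 unfolding e1 by (intro mult_right_mono) auto
      have i2: "3 * a / r \<le> 3 * B / (r * sqrt r)"
      proof -
        have "3 * a / r \<le> 3 * (B / sqrt r) / r" using ab rp by (intro divide_right_mono mult_left_mono) auto
        then show ?thesis by (simp add: mult.commute)
      qed
      have i3: "2 * a\<^sup>2 / sqrt r \<le> 2 * B\<^sup>2 / (r * sqrt r)"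
      proof -
        have "2 * a\<^sup>2 / sqrt r \<le> 2 * (B / sqrt r)\<^sup>2 / sqrt r" using c2 sr by (intro divide_right_mono mult_left_mono) auto
        then show ?thesis using e2 by simp
      qed
      show ?thesis using i1 i2 i3 by simp
    qed
    also have "\<dots> = (5/2 * (B ^ 3 * E + 3 * B + 2 * B\<^sup>2)) / (r * sqrt r)"
      by (simp add: add_divide_distrib)
    also have "\<dots> \<le> K3 A T / (r * sqrt r)"
    proof (rule divide_right_mono)
      show "5/2 * (B ^ 3 * E + 3 * B + 2 * B\<^sup>2) \<le> K3 A T" unfolding K3e P3_def[symmetric] using P1 P2 by simp
    qed (use rp in auto)
    finally show "\<bar>f' r\<bar> \<le> K3 A T / (r * sqrt r)" .
  qed (use st v in \<open>auto simp: L_def\<close>)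
  then show ?thesis unfolding f_def .
qed


lemma min_one_pow_nonneg: "min_one_pow s v \<ge> 0"
  unfolding min_one_pow_def by auto

theorem mainTheorem6:
  fixes A T :: real
  assumes "T > 0"
  shows "\<exists>C. \<exists>\<epsilon>0>0. \<forall>\<epsilon>. 0 < \<epsilon> \<and> \<epsilon> < \<epsilon>0 \<longrightarrow>
           (\<forall>s t x y v. 0 \<le> s \<and> s < t \<and> t \<le> T / \<epsilon>\<^sup>2 \<and> 0 \<le> v \<and> v \<le> 1 \<longrightarrow>
              \<bar>robin_kernel A \<epsilon> t x y - robin_kernel A \<epsilon> s x y\<bar>
                \<le> C * min_one_pow s v * (t - s) powr v)"
proof -
  define C where "C = 2 * 24 + 3/2 * (2 * 24) + 2 * K3 A T"
  define e0 where "e0 = 1 / (2 * \<bar>A\<bar> + 2)"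
  have e0: "e0 > 0" unfolding e0_def by (simp add: add_pos_nonneg)
  have main: "\<bar>robin_kernel A \<epsilon> t x y - robin_kernel A \<epsilon> s x y\<bar> \<le> C * min_one_pow s v * (t - s) powr v"
    if eps: "0 < \<epsilon>" "\<epsilon> < e0" and H: "0 \<le> s" "s < t" "t \<le> T / \<epsilon>\<^sup>2" "0 \<le> v" "v \<le> 1"
    for \<epsilon> s t x y v
  proof -
    have den: "2 * \<bar>A\<bar> + 2 > 0" by (simp add: add_pos_nonneg)
    have "(2 * \<bar>A\<bar> + 2) * \<epsilon> < 1" using eps den unfolding e0_def by (simp add: field_simps)
    then have aeps: "\<bar>A\<bar> * \<epsilon> \<le> 1/2" and e1: "\<epsilon> \<le> 1"
      using eps by (auto simp: algebra_simps) (smt (verit) mult_nonneg_nonneg abs_ge_zero)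
    define \<mu> where "\<mu> = muA A \<epsilon>"
    have mudef: "\<mu> = 1 - A * \<epsilon>" by (simp add: \<mu>_def muA_def)
    have "\<bar>A * \<epsilon>\<bar> \<le> 1/2" using aeps eps by (simp add: abs_mult)
    then have mub: "1/2 \<le> \<mu>" "\<mu> \<le> 3/2" unfolding mudef by auto
    have mup: "muA A \<epsilon> > 0" using mub by (simp add: \<mu>_def)
    define w where "w = int x + int y"
    have w: "w \<ge> 0" by (simp add: w_def)
    have st0: "0 \<le> t" "0 \<le> s" using H by auto
    have dec: "robin_kernel A \<epsilon> r x y = heat_kernel r (int x - int y) + \<mu> * heat_kernel r (w + 1) + (\<mu>\<^sup>2 - 1) * SS \<mu> (w + 2) r"
      if "0 \<le> r" for r
      using robin_decomp[OF mup that, of x y] by (simp add: \<mu>_def w_def)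
    define m where "m = min_one_pow s v * (t - s) powr v"
    have m0: "m \<ge> 0" unfolding m_def using min_one_pow_nonneg by simp
    have d1: "\<bar>heat_kernel t (int x - int y) - heat_kernel s (int x - int y)\<bar> \<le> 2 * 24 * m"
      using f1_ok[of s t v "int x - int y"] H unfolding m_def by (simp add: mult.assoc)
    have d2: "\<bar>\<mu> * heat_kernel t (w + 1) - \<mu> * heat_kernel s (w + 1)\<bar> \<le> 3/2 * (2 * 24 * m)"
    proof -
      have "\<bar>\<mu> * heat_kernel t (w + 1) - \<mu> * heat_kernel s (w + 1)\<bar> = \<bar>\<mu>\<bar> * \<bar>heat_kernel t (w + 1) - heat_kernel s (w + 1)\<bar>"
        by (simp add: abs_mult[symmetric] right_diff_distrib)
      also have "\<dots> \<le> 3/2 * (2 * 24 * m)"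
        using f1_ok[of s t v "w + 1"] H mub unfolding m_def by (intro mult_mono) (auto simp: mult.assoc)
      finally show ?thesis .
    qed
    have d3: "\<bar>(\<mu>\<^sup>2 - 1) * SS \<mu> (w + 2) t - (\<mu>\<^sup>2 - 1) * SS \<mu> (w + 2) s\<bar> \<le> 2 * K3 A T * m"
      using f3_ok[OF eps(1) e1 aeps \<open>T > 0\<close> w H(1) H(2) H(3) H(4) H(5) mudef] unfolding m_def by (simp add: mult.assoc)
    have "\<bar>robin_kernel A \<epsilon> t x y - robin_kernel A \<epsilon> s x y\<bar>
        = \<bar>(heat_kernel t (int x - int y) - heat_kernel s (int x - int y))
           + (\<mu> * heat_kernel t (w + 1) - \<mu> * heat_kernel s (w + 1))
           + ((\<mu>\<^sup>2 - 1) * SS \<mu> (w + 2) t - (\<mu>\<^sup>2 - 1) * SS \<mu> (w + 2) s)\<bar>"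
      unfolding dec[OF st0(1)] dec[OF st0(2)] by (simp add: algebra_simps)
    also have "\<dots> \<le> 2 * 24 * m + 3/2 * (2 * 24 * m) + 2 * K3 A T * m"
      using d1 d2 d3 by (smt (verit) abs_triangle_ineq)
    also have "\<dots> = C * m" unfolding C_def by (simp add: algebra_simps)
    finally show ?thesis unfolding m_def by (simp add: mult.assoc)
  qed
  show ?thesis
    by (rule exI[of _ C], rule exI[of _ e0]) (use e0 main in blast)
qed


end
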